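(* The PIR capacity of the star graph $S_N$ on $N$ vertices satisfies $\mathscr{C}(S_N)=\Theta(N^{-1/2})$ as $N\to\infty$.
   Context: The star graph $S_N$ has $N$ vertices (servers), one (server $N$) of degree $N-1$ and the others of degree $1$; there are $K=N-1$ files, file $W_i$ stored on leaf server $i$ and on server $N$. Graph-based PIR model: files are independent, each uniform on $\mathbb{F}_2^L$; a user wants $W_\theta$, $\theta$ uniform on $[K]$ and independent of the files; it sends queries $Q_1,\dots,Q_N$ (independent of the files); server $i$ answers $A_i$, a deterministic function of $Q_i$ and the files on it. Reliability: $W_\theta$ is determined by all answers and queries. Privacy: $H(\theta\mid Q_i,W_{S_i})=\log K$ for every $i$, $W_{S_i}$ being the files on server $i$. The rate is $L/\sum_i H(A_i)$; the PIR capacity is the supremum of rates over all schemes and file lengths $L$. *)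

theory Defs
  imports "HOL-Probability.Product_PMF" "HOL-Library.Landau_Symbols"
begin

text \<open>Star graph S_N: servers 1..N, files 1..K with K = N-1.
  Leaf server i < N stores file i; the centre N stores all files.\<close>
definition star_store :: "nat \<Rightarrow> nat \<Rightarrow> nat set" where
  "star_store N i = (if i = N then {1..N-1} else {i})"

definition ent :: "'a pmf \<Rightarrow> real" where
  "ent p = (\<Sum>x\<in>set_pmf p. - (pmf p x * log 2 (pmf p x)))"

definition cond_ent :: "'w pmf \<Rightarrow> ('w \<Rightarrow> 'a) \<Rightarrow> ('w \<Rightarrow> 'b) \<Rightarrow> real" where
  "cond_ent P X Y = ent (map_pmf (\<lambda>w. (X w, Y w)) P) - ent (map_pmf Y P)"

text \<open>K independent files, each uniform on F_2^L (bit strings of length L);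
  W j is file j for j in 1..K (value [] elsewhere, irrelevant).\<close>
definition files_pmf :: "nat \<Rightarrow> nat \<Rightarrow> (nat \<Rightarrow> bool list) pmf" where
  "files_pmf K L = Pi_pmf {1..K} [] (\<lambda>_. pmf_of_set {xs. length xs = L})"

text \<open>Joint law of (theta, Q, W): mu is the joint law of the desired index theta and the
  queries Q (Q i = query to server i), drawn independently of the files.\<close>
definition pir_joint :: "(nat \<times> (nat \<Rightarrow> nat)) pmf \<Rightarrow> nat \<Rightarrow> nat
    \<Rightarrow> (nat \<times> (nat \<Rightarrow> nat) \<times> (nat \<Rightarrow> bool list)) pmf" where
  "pir_joint \<mu> K L = bind_pmf \<mu> (\<lambda>(\<theta>, Q). map_pmf (\<lambda>W. (\<theta>, Q, W)) (files_pmf K L))"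

text \<open>ans i q W is the answer of server i to query q; it may only depend on the files stored
  on server i.\<close>
definition is_star_pir_scheme :: "nat \<Rightarrow> nat \<Rightarrow> (nat \<times> (nat \<Rightarrow> nat)) pmf
    \<Rightarrow> (nat \<Rightarrow> nat \<Rightarrow> (nat \<Rightarrow> bool list) \<Rightarrow> nat) \<Rightarrow> bool" where
  "is_star_pir_scheme N L \<mu> ans \<longleftrightarrow>
     (let K = N - 1; P = pir_joint \<mu> K L in
       finite (set_pmf \<mu>)
     \<and> map_pmf fst \<mu> = pmf_of_set {1..K}
     \<and> (\<forall>i\<in>{1..N}. \<forall>q W W'. (\<forall>j\<in>star_store N i. W j = W' j) \<longrightarrow> ans i q W = ans i q W')
     \<and> (\<exists>dec. \<forall>(\<theta>, Q, W)\<in>set_pmf P.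
            dec (\<lambda>i. if i \<in> {1..N} then ans i (Q i) W else 0)
                (\<lambda>i. if i \<in> {1..N} then Q i else 0) = W \<theta>)
     \<and> (\<forall>i\<in>{1..N}. cond_ent P (\<lambda>(\<theta>, Q, W). \<theta>)
            (\<lambda>(\<theta>, Q, W). (Q i, \<lambda>j. if j \<in> star_store N i then W j else [])) = log 2 (real K)))"

definition pir_rate :: "nat \<Rightarrow> nat \<Rightarrow> (nat \<times> (nat \<Rightarrow> nat)) pmf
    \<Rightarrow> (nat \<Rightarrow> nat \<Rightarrow> (nat \<Rightarrow> bool list) \<Rightarrow> nat) \<Rightarrow> real" where
  "pir_rate N L \<mu> ans =
     real L / (\<Sum>i=1..N. ent (map_pmf (\<lambda>(\<theta>, Q, W). ans i (Q i) W) (pir_joint \<mu> (N - 1) L)))"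

definition pir_capacity_star :: "nat \<Rightarrow> real" where
  "pir_capacity_star N =
     Sup {pir_rate N L \<mu> ans | L \<mu> ans. L \<ge> 1 \<and> is_star_pir_scheme N L \<mu> ans}"

end

theory Submission
  imports Defs
begin

lemma ln_less_minus_one:
  fixes x :: real assumes "0 < x" "x \<noteq> 1" shows "ln x < x - 1"
proof -
  have s: "sqrt x > 0" using assms by simp
  have s1: "sqrt x \<noteq> 1" using assms by auto
  have "ln x = 2 * ln (sqrt x)" using assms by (simp add: ln_sqrt)
  also have "\<dots> \<le> 2 * (sqrt x - 1)" using ln_le_minus_one[OF s] by simp
  also have "\<dots> < x - 1"
  proof -
    have "(sqrt x - 1)^2 > 0" using s1 by simp
    hence "(sqrt x)^2 - 2 * sqrt x + 1 > 0" by (simp add: power2_eq_square algebra_simps)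
    thus ?thesis using assms by simp
  qed
  finally show ?thesis .
qed

lemma gibbs_pt:
  fixes p q :: real assumes "0 < p" "0 < q"
  shows "(p - q) / ln 2 \<le> p * log 2 p - p * log 2 q"
proof -
  have "ln (q/p) \<le> q/p - 1" using assms by (intro ln_le_minus_one) auto
  hence "p * ln (q/p) \<le> p * (q/p - 1)" using assms by (intro mult_left_mono) auto
  hence "p * (ln q - ln p) \<le> q - p" using assms by (simp add: ln_div algebra_simps)
  hence "(p - q) \<le> p * (ln p - ln q)" by (simp add: algebra_simps)
  hence "(p - q) / ln 2 \<le> p * (ln p - ln q) / ln 2" by (intro divide_right_mono) auto
  moreover have "p * log 2 p - p * log 2 q = p * (ln p - ln q) / ln 2"
    by (simp add: log_def right_diff_distrib diff_divide_distrib)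
  ultimately show ?thesis by simp
qed

lemma gibbs_pt_strict:
  fixes p q :: real assumes "0 < p" "0 < q" "p \<noteq> q"
  shows "(p - q) / ln 2 < p * log 2 p - p * log 2 q"
proof -
  have "ln (q/p) < q/p - 1" using assms by (intro ln_less_minus_one) auto
  hence "p * ln (q/p) < p * (q/p - 1)" using assms by (intro mult_strict_left_mono) auto
  hence "p * (ln q - ln p) < q - p" using assms by (simp add: ln_div algebra_simps)
  hence "(p - q) < p * (ln p - ln q)" by (simp add: algebra_simps)
  hence "(p - q) / ln 2 < p * (ln p - ln q) / ln 2" by (intro divide_strict_right_mono) auto
  moreover have "p * log 2 p - p * log 2 q = p * (ln p - ln q) / ln 2"
    by (simp add: log_def right_diff_distrib diff_divide_distrib)
  ultimately show ?thesis by simp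
qed

lemma gibbs:
  fixes p q :: "'a \<Rightarrow> real"
  assumes "finite A" "\<And>a. a \<in> A \<Longrightarrow> 0 < p a" "\<And>a. a \<in> A \<Longrightarrow> 0 < q a"
    "sum p A = 1" "sum q A \<le> 1"
  shows "(\<Sum>a\<in>A. p a * (- log 2 (p a))) \<le> (\<Sum>a\<in>A. p a * (- log 2 (q a)))"
proof -
  have "0 \<le> (sum p A - sum q A) / ln 2" using assms by simp
  also have "\<dots> = (\<Sum>a\<in>A. (p a - q a) / ln 2)" by (simp only: sum_divide_distrib[symmetric] sum_subtractf)
  also have "\<dots> \<le> (\<Sum>a\<in>A. p a * log 2 (p a) - p a * log 2 (q a))"
    by (intro sum_mono gibbs_pt) (use assms in auto)
  finally have "0 \<le> (\<Sum>a\<in>A. p a * log 2 (p a)) - (\<Sum>a\<in>A. p a * log 2 (q a))"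
    by (simp add: sum_subtractf)
  thus ?thesis by (simp add: sum_negf)
qed

lemma gibbs_eq:
  fixes p q :: "'a \<Rightarrow> real"
  assumes "finite A" "\<And>a. a \<in> A \<Longrightarrow> 0 < p a" "\<And>a. a \<in> A \<Longrightarrow> 0 < q a"
    "sum p A = 1" "sum q A \<le> 1"
    "(\<Sum>a\<in>A. p a * (- log 2 (p a))) = (\<Sum>a\<in>A. p a * (- log 2 (q a)))"
  shows "\<forall>a\<in>A. p a = q a"
proof (rule ccontr)
  assume "\<not> (\<forall>a\<in>A. p a = q a)"
  then obtain b where b: "b \<in> A" "p b \<noteq> q b" by auto
  have "0 \<le> (sum p A - sum q A) / ln 2" using assms by simp
  also have "\<dots> = (\<Sum>a\<in>A. (p a - q a) / ln 2)" by (simp only: sum_divide_distrib[symmetric] sum_subtractf)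
  also have "\<dots> < (\<Sum>a\<in>A. p a * log 2 (p a) - p a * log 2 (q a))"
    apply (rule sum_strict_mono_ex1)
    using assms b by (auto intro!: gibbs_pt gibbs_pt_strict)
  finally have "0 < (\<Sum>a\<in>A. p a * log 2 (p a)) - (\<Sum>a\<in>A. p a * log 2 (q a))"
    by (simp add: sum_subtractf)
  thus False using assms(6) by (simp add: sum_negf)
qed

lemma ent_alt: "ent p = (\<Sum>x\<in>set_pmf p. pmf p x * (- log 2 (pmf p x)))"
  unfolding ent_def by simp

lemma ent_nonneg: "ent p \<ge> 0"
  unfolding ent_def
proof (rule sum_nonneg)
  fix x assume "x \<in> set_pmf p"
  hence "0 < pmf p x" by (simp add: pmf_positive)
  moreover have "pmf p x \<le> 1" by (rule pmf_le_1)
  ultimately have "log 2 (pmf p x) \<le> 0" by simp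
  thus "0 \<le> - (pmf p x * log 2 (pmf p x))" using \<open>0 < pmf p x\<close>
    by (simp add: mult_nonneg_nonpos)
qed

lemma pmf_map_fiber:
  assumes "finite (set_pmf p)"
  shows "pmf (map_pmf f p) y = (\<Sum>x\<in>{x\<in>set_pmf p. f x = y}. pmf p x)"
proof -
  have "pmf (map_pmf f p) y = measure_pmf.prob p (f -` {y})" by (simp add: pmf_map)
  also have "\<dots> = measure_pmf.prob p (f -` {y} \<inter> set_pmf p)" by (simp add: measure_Int_set_pmf)
  also have "\<dots> = sum (pmf p) (f -` {y} \<inter> set_pmf p)"
    using assms by (intro measure_measure_pmf_finite) auto
  also have "f -` {y} \<inter> set_pmf p = {x\<in>set_pmf p. f x = y}" by auto
  finally show ?thesis .
qed

lemma ent_map_sum: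
  assumes "finite (set_pmf p)"
  shows "ent (map_pmf f p) = (\<Sum>x\<in>set_pmf p. pmf p x * (- log 2 (pmf (map_pmf f p) (f x))))"
proof -
  let ?c = "\<lambda>y. - log 2 (pmf (map_pmf f p) y)"
  have "(\<Sum>x\<in>set_pmf p. pmf p x * ?c (f x))
      = (\<Sum>y\<in>f ` set_pmf p. \<Sum>x\<in>{x\<in>set_pmf p. f x = y}. pmf p x * ?c (f x))"
    using assms by (rule sum.image_gen)
  also have "\<dots> = (\<Sum>y\<in>f ` set_pmf p. (\<Sum>x\<in>{x\<in>set_pmf p. f x = y}. pmf p x) * ?c y)"
  proof (rule sum.cong[OF refl])
    fix y assume "y \<in> f ` set_pmf p"
    have "(\<Sum>x\<in>{x\<in>set_pmf p. f x = y}. pmf p x * ?c (f x)) = (\<Sum>x\<in>{x\<in>set_pmf p. f x = y}. pmf p x * ?c y)"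
      by (rule sum.cong) auto
    also have "\<dots> = (\<Sum>x\<in>{x\<in>set_pmf p. f x = y}. pmf p x) * ?c y"
      by (rule sum_distrib_right[symmetric])
    finally show "(\<Sum>x\<in>{x\<in>set_pmf p. f x = y}. pmf p x * ?c (f x)) = (\<Sum>x\<in>{x\<in>set_pmf p. f x = y}. pmf p x) * ?c y" .
  qed
  also have "\<dots> = (\<Sum>y\<in>f ` set_pmf p. pmf (map_pmf f p) y * ?c y)"
    using assms by (simp add: pmf_map_fiber)
  finally show ?thesis by (simp add: ent_alt)
qed

lemma finite_set_map_pmf: "finite (set_pmf p) \<Longrightarrow> finite (set_pmf (map_pmf f p))"
  by simp

lemma pmf_map_ge:
  assumes "finite (set_pmf p)" "x \<in> set_pmf p" "\<And>x'. x' \<in> set_pmf p \<Longrightarrow> g x' = g x \<Longrightarrow> f x' = f x"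
  shows "pmf (map_pmf g p) (g x) \<le> pmf (map_pmf f p) (f x)"
proof -
  have sub: "{x'\<in>set_pmf p. g x' = g x} \<subseteq> {x'\<in>set_pmf p. f x' = f x}" using assms(3) by auto
  have "(\<Sum>x\<in>{x'\<in>set_pmf p. g x' = g x}. pmf p x) \<le> (\<Sum>x\<in>{x'\<in>set_pmf p. f x' = f x}. pmf p x)"
    by (rule sum_mono2) (use sub assms(1) in auto)
  thus ?thesis by (simp only: pmf_map_fiber[OF assms(1)])
qed

lemma ent_map_mono:
  assumes fin: "finite (set_pmf p)" and fac: "\<And>x. x \<in> set_pmf p \<Longrightarrow> f x = \<phi> (g x)"
  shows "ent (map_pmf f p) \<le> ent (map_pmf g p)"
proof -
  have "(\<Sum>x\<in>set_pmf p. pmf p x * (- log 2 (pmf (map_pmf f p) (f x))))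
     \<le> (\<Sum>x\<in>set_pmf p. pmf p x * (- log 2 (pmf (map_pmf g p) (g x))))"
  proof (rule sum_mono)
    fix x assume x: "x \<in> set_pmf p"
    have pos: "0 < pmf (map_pmf g p) (g x)" using x by (simp add: pmf_positive)
    have le: "pmf (map_pmf g p) (g x) \<le> pmf (map_pmf f p) (f x)"
      by (rule pmf_map_ge[OF fin x]) (use fac x in auto)
    have "log 2 (pmf (map_pmf g p) (g x)) \<le> log 2 (pmf (map_pmf f p) (f x))"
      using pos le by simp
    thus "pmf p x * (- log 2 (pmf (map_pmf f p) (f x))) \<le> pmf p x * (- log 2 (pmf (map_pmf g p) (g x)))"
      by (intro mult_left_mono) auto
  qed
  thus ?thesis using fin by (simp add: ent_map_sum)
qed

lemma ent_map_eq:
  assumes fin: "finite (set_pmf p)" and "\<And>x. x \<in> set_pmf p \<Longrightarrow> f x = \<phi> (g x)"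
    and "\<And>x. x \<in> set_pmf p \<Longrightarrow> g x = \<psi> (f x)"
  shows "ent (map_pmf f p) = ent (map_pmf g p)"
proof (rule antisym)
  show "ent (map_pmf f p) \<le> ent (map_pmf g p)" by (rule ent_map_mono[OF fin, of f \<phi> g]) (rule assms(2))
  show "ent (map_pmf g p) \<le> ent (map_pmf f p)" by (rule ent_map_mono[OF fin, of g \<psi> f]) (rule assms(3))
qed

lemma ent_map_id: "finite (set_pmf p) \<Longrightarrow> ent (map_pmf (\<lambda>x. x) p) = ent p"
  by (simp add: map_pmf_ident)

lemma ent_le_card:
  assumes "finite A" "set_pmf p \<subseteq> A"
  shows "ent p \<le> log 2 (card A)"
proof -
  have fin: "finite (set_pmf p)" using assms finite_subset by auto
  have ne: "set_pmf p \<noteq> {}" by (simp add: set_pmf_not_empty)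
  hence cA: "card A > 0" using assms by (metis card_gt_0_iff subset_empty)
  have "ent p \<le> (\<Sum>a\<in>set_pmf p. pmf p a * (- log 2 (1 / card A)))"
    unfolding ent_alt
  proof (rule gibbs[OF fin])
    show "sum (pmf p) (set_pmf p) = 1" using fin by (simp add: sum_pmf_eq_1)
    have "(\<Sum>a\<in>set_pmf p. 1 / real (card A)) = card (set_pmf p) / card A" by simp
    also have "\<dots> \<le> 1" using cA card_mono[OF assms] by simp
    finally show "(\<Sum>a\<in>set_pmf p. 1 / real (card A)) \<le> 1" .
  qed (use cA in \<open>auto simp: pmf_positive\<close>)
  also have "\<dots> = log 2 (card A)"
    using fin cA by (simp add: sum_distrib_right[symmetric] sum_pmf_eq_1 log_divide)
  finally show ?thesis .
qed

lemma ent_pmf_of_set: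
  assumes "finite A" "A \<noteq> {}" shows "ent (pmf_of_set A) = log 2 (card A)"
proof -
  have "ent (pmf_of_set A) = (\<Sum>x\<in>A. (1 / card A) * (- log 2 (1 / card A)))"
    unfolding ent_alt using assms by (intro sum.cong) auto
  also have "\<dots> = log 2 (card A)" using assms by (simp add: log_divide)
  finally show ?thesis .
qed

lemma ent_pair: 
  assumes "finite (set_pmf A)" "finite (set_pmf B)"
  shows "ent (pair_pmf A B) = ent A + ent B"
proof -
  have sA: "(\<Sum>a\<in>set_pmf A. pmf A a) = 1" using assms by (simp add: sum_pmf_eq_1)
  have sB: "(\<Sum>b\<in>set_pmf B. pmf B b) = 1" using assms by (simp add: sum_pmf_eq_1)
  have "ent (pair_pmf A B) = (\<Sum>z\<in>set_pmf A \<times> set_pmf B. pmf A (fst z) * pmf B (snd z) *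
           (- log 2 (pmf A (fst z)) - log 2 (pmf B (snd z))))"
    unfolding ent_alt set_pair_pmf
    by (intro sum.cong refl) (auto simp: pmf_pair log_mult pmf_positive algebra_simps)
  also have "\<dots> = (\<Sum>a\<in>set_pmf A. \<Sum>b\<in>set_pmf B. pmf A a * pmf B b *
           (- log 2 (pmf A a) - log 2 (pmf B b)))"
    by (subst sum.cartesian_product) (simp add: case_prod_beta)
  also have "\<dots> = (\<Sum>a\<in>set_pmf A. pmf A a * (- log 2 (pmf A a)) * (\<Sum>b\<in>set_pmf B. pmf B b)
                 + pmf A a * (\<Sum>b\<in>set_pmf B. pmf B b * (- log 2 (pmf B b))))"
  proof (rule sum.cong[OF refl])
    fix a assume "a \<in> set_pmf A"
    have "(\<Sum>b\<in>set_pmf B. pmf A a * pmf B b * (- log 2 (pmf A a) - log 2 (pmf B b)))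
      = (\<Sum>b\<in>set_pmf B. pmf A a * (- log 2 (pmf A a)) * pmf B b + pmf A a * (pmf B b * (- log 2 (pmf B b))))"
      by (rule sum.cong) (auto simp: algebra_simps)
    also have "\<dots> = pmf A a * (- log 2 (pmf A a)) * (\<Sum>b\<in>set_pmf B. pmf B b)
          + pmf A a * (\<Sum>b\<in>set_pmf B. pmf B b * (- log 2 (pmf B b)))"
      by (simp only: sum.distrib sum_distrib_left)
    finally show "(\<Sum>b\<in>set_pmf B. pmf A a * pmf B b * (- log 2 (pmf A a) - log 2 (pmf B b)))
      = pmf A a * (- log 2 (pmf A a)) * (\<Sum>b\<in>set_pmf B. pmf B b)
          + pmf A a * (\<Sum>b\<in>set_pmf B. pmf B b * (- log 2 (pmf B b)))" .
  qed
  also have "\<dots> = (\<Sum>a\<in>set_pmf A. pmf A a * (- log 2 (pmf A a))) + (\<Sum>a\<in>set_pmf A. pmf A a) * ent B"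
    by (simp only: sB mult_1_right sum.distrib sum_distrib_right ent_alt)
  also have "\<dots> = ent A + ent B" by (simp only: sA mult_1_left ent_alt)
  finally show ?thesis .
qed

lemma sum_pmf_le_1: "finite A \<Longrightarrow> sum (pmf p) A \<le> 1"
  by (metis measure_measure_pmf_finite measure_pmf.prob_le_1)

lemma pmf_eq_on_support:
  assumes fin: "finite (set_pmf T)" and eq: "\<And>t. t \<in> set_pmf T \<Longrightarrow> pmf T t = pmf R t"
  shows "T = R"
proof (rule pmf_eqI)
  fix i
  show "pmf T i = pmf R i"
  proof (cases "i \<in> set_pmf T")
    case True thus ?thesis using eq by auto
  next
    case False
    hence T0: "pmf T i = 0" by (simp add: set_pmf_eq)
    have "sum (pmf R) (set_pmf T) = sum (pmf T) (set_pmf T)" using eq by (intro sum.cong) auto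
    also have "\<dots> = 1" using fin by (simp add: sum_pmf_eq_1)
    finally have s1: "sum (pmf R) (set_pmf T) = 1" .
    have "sum (pmf R) (insert i (set_pmf T)) \<le> 1" using fin by (intro sum_pmf_le_1) auto
    hence "pmf R i + 1 \<le> 1" using fin False s1 by simp
    hence "pmf R i = 0" using pmf_nonneg[of R i] by linarith
    thus ?thesis using T0 by simp
  qed
qed

lemma ent_bound_q:
  assumes fin: "finite (set_pmf p)" and pos: "\<And>x. x \<in> set_pmf p \<Longrightarrow> 0 < q x"
    and sq: "(\<Sum>x\<in>set_pmf p. q x) \<le> 1"
  shows "ent p \<le> (\<Sum>x\<in>set_pmf p. pmf p x * (- log 2 (q x)))"
  unfolding ent_alt
  by (rule gibbs[OF fin]) (use fin pos sq in \<open>auto simp: pmf_positive sum_pmf_eq_1\<close>)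

lemma mi_pair:
  fixes T :: "('a \<times> 'b) pmf"
  assumes fin: "finite (set_pmf T)"
  shows "ent T \<le> ent (map_pmf fst T) + ent (map_pmf snd T)"
    and "ent T = ent (map_pmf fst T) + ent (map_pmf snd T) \<Longrightarrow> T = pair_pmf (map_pmf fst T) (map_pmf snd T)"
proof -
  let ?P1 = "map_pmf fst T" and ?P2 = "map_pmf snd T"
  let ?q = "\<lambda>t. pmf (pair_pmf ?P1 ?P2) t"
  have qpos: "0 < ?q t" if "t \<in> set_pmf T" for t
  proof -
    have "fst t \<in> set_pmf ?P1" "snd t \<in> set_pmf ?P2" using that by auto
    thus ?thesis by (cases t) (simp add: pmf_pair pmf_positive)
  qed
  have sq: "sum ?q (set_pmf T) \<le> 1" using fin by (rule sum_pmf_le_1)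
  have sumE: "ent ?P1 + ent ?P2 = (\<Sum>t\<in>set_pmf T. pmf T t * (- log 2 (?q t)))"
  proof -
    have "ent ?P1 + ent ?P2 = (\<Sum>t\<in>set_pmf T. pmf T t * (- log 2 (pmf ?P1 (fst t))) + pmf T t * (- log 2 (pmf ?P2 (snd t))))"
      by (simp only: ent_map_sum[OF fin] sum.distrib)
    also have "\<dots> = (\<Sum>t\<in>set_pmf T. pmf T t * (- log 2 (?q t)))"
    proof (rule sum.cong[OF refl])
      fix t assume t: "t \<in> set_pmf T"
      have p1: "0 < pmf ?P1 (fst t)" using t by (simp add: pmf_positive)
      have p2: "0 < pmf ?P2 (snd t)" using t by (simp add: pmf_positive)
      have "?q t = pmf ?P1 (fst t) * pmf ?P2 (snd t)" by (cases t) (simp add: pmf_pair)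
      hence "log 2 (?q t) = log 2 (pmf ?P1 (fst t)) + log 2 (pmf ?P2 (snd t))"
        using p1 p2 by (simp add: log_mult)
      thus "pmf T t * (- log 2 (pmf ?P1 (fst t))) + pmf T t * (- log 2 (pmf ?P2 (snd t))) = pmf T t * (- log 2 (?q t))"
        by (simp add: algebra_simps)
    qed
    finally show ?thesis .
  qed
  have G: "(\<Sum>t\<in>set_pmf T. pmf T t * (- log 2 (pmf T t))) \<le> (\<Sum>t\<in>set_pmf T. pmf T t * (- log 2 (?q t)))"
    by (rule gibbs[OF fin]) (use fin qpos sq in \<open>auto simp: pmf_positive sum_pmf_eq_1\<close>)
  thus "ent T \<le> ent ?P1 + ent ?P2" using sumE by (simp add: ent_alt)
  assume eqE: "ent T = ent ?P1 + ent ?P2"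
  have "\<forall>t\<in>set_pmf T. pmf T t = ?q t"
    by (rule gibbs_eq[OF fin]) (use fin qpos sq eqE sumE in \<open>auto simp: pmf_positive sum_pmf_eq_1 ent_alt\<close>)
  thus "T = pair_pmf ?P1 ?P2" using pmf_eq_on_support[OF fin] by auto
qed

lemma ent_sub:
  assumes fin: "finite (set_pmf p)"
  shows "ent (map_pmf (\<lambda>x. (f x, g x)) p) \<le> ent (map_pmf f p) + ent (map_pmf g p)"
proof -
  have "ent (map_pmf (\<lambda>x. (f x, g x)) p) \<le> ent (map_pmf fst (map_pmf (\<lambda>x. (f x, g x)) p)) + ent (map_pmf snd (map_pmf (\<lambda>x. (f x, g x)) p))"
    using fin by (intro mi_pair(1)) simp
  thus ?thesis by (simp add: pmf.map_comp o_def)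
qed

lemma pmf_bind_finite:
  assumes "finite (set_pmf M)"
  shows "pmf (bind_pmf M k) v = (\<Sum>x\<in>set_pmf M. pmf M x * pmf (k x) v)"
  unfolding pmf_bind
  by (subst integral_measure_pmf_real[OF assms]) (auto simp: mult.commute)

lemma ent_bind_ge:
  assumes finM: "finite (set_pmf M)" and fink: "\<And>x. x \<in> set_pmf M \<Longrightarrow> finite (set_pmf (k x))"
  shows "(\<Sum>x\<in>set_pmf M. pmf M x * ent (k x)) \<le> ent (bind_pmf M k)"
proof -
  let ?r = "bind_pmf M k"
  have setr: "set_pmf ?r = (\<Union>x\<in>set_pmf M. set_pmf (k x))" by (simp add: set_bind_pmf)
  have finr: "finite (set_pmf ?r)" using finM fink setr by auto
  have "ent ?r = (\<Sum>v\<in>set_pmf ?r. (\<Sum>x\<in>set_pmf M. pmf M x * pmf (k x) v) * (- log 2 (pmf ?r v)))"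
    unfolding ent_alt using finM by (simp add: pmf_bind_finite)
  also have "\<dots> = (\<Sum>v\<in>set_pmf ?r. \<Sum>x\<in>set_pmf M. pmf M x * (pmf (k x) v * (- log 2 (pmf ?r v))))"
    by (simp only: sum_distrib_right mult.assoc)
  also have "\<dots> = (\<Sum>x\<in>set_pmf M. \<Sum>v\<in>set_pmf ?r. pmf M x * (pmf (k x) v * (- log 2 (pmf ?r v))))"
    by (rule sum.swap)
  also have "\<dots> = (\<Sum>x\<in>set_pmf M. pmf M x * (\<Sum>v\<in>set_pmf ?r. pmf (k x) v * (- log 2 (pmf ?r v))))"
    by (simp only: sum_distrib_left)
  also have "\<dots> = (\<Sum>x\<in>set_pmf M. pmf M x * (\<Sum>v\<in>set_pmf (k x). pmf (k x) v * (- log 2 (pmf ?r v))))"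
  proof (rule sum.cong[OF refl])
    fix x assume x: "x \<in> set_pmf M"
    have "(\<Sum>v\<in>set_pmf ?r. pmf (k x) v * (- log 2 (pmf ?r v))) = (\<Sum>v\<in>set_pmf (k x). pmf (k x) v * (- log 2 (pmf ?r v)))"
      by (rule sum.mono_neutral_right) (use finr x setr in \<open>auto simp: set_pmf_eq\<close>)
    thus "pmf M x * (\<Sum>v\<in>set_pmf ?r. pmf (k x) v * (- log 2 (pmf ?r v))) = pmf M x * (\<Sum>v\<in>set_pmf (k x). pmf (k x) v * (- log 2 (pmf ?r v)))"
      by simp
  qed
  finally have E: "ent ?r = (\<Sum>x\<in>set_pmf M. pmf M x * (\<Sum>v\<in>set_pmf (k x). pmf (k x) v * (- log 2 (pmf ?r v))))" .
  have "(\<Sum>x\<in>set_pmf M. pmf M x * ent (k x)) \<le> (\<Sum>x\<in>set_pmf M. pmf M x * (\<Sum>v\<in>set_pmf (k x). pmf (k x) v * (- log 2 (pmf ?r v))))"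
  proof (rule sum_mono)
    fix x assume x: "x \<in> set_pmf M"
    have "ent (k x) \<le> (\<Sum>v\<in>set_pmf (k x). pmf (k x) v * (- log 2 (pmf ?r v)))"
    proof (rule ent_bound_q[OF fink[OF x]])
      fix v assume "v \<in> set_pmf (k x)"
      hence "v \<in> set_pmf ?r" using x setr by auto
      thus "0 < pmf ?r v" by (simp add: pmf_positive)
    next
      show "sum (pmf ?r) (set_pmf (k x)) \<le> 1" using fink[OF x] by (rule sum_pmf_le_1)
    qed
    thus "pmf M x * ent (k x) \<le> pmf M x * (\<Sum>v\<in>set_pmf (k x). pmf (k x) v * (- log 2 (pmf ?r v)))"
      by (intro mult_left_mono) auto
  qed
  thus ?thesis using E by simp
qed

definition rW :: "nat set \<Rightarrow> (nat \<Rightarrow> bool list) \<Rightarrow> (nat \<Rightarrow> bool list)" where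
  "rW T W = (\<lambda>j. if j \<in> T then W j else [])"

lemma strings_finite: "finite {xs::bool list. length xs = L}"
  using finite_lists_length_eq[of "UNIV::bool set" L] by simp

lemma strings_card: "card {xs::bool list. length xs = L} = 2 ^ L"
  using card_lists_length_eq[of "UNIV::bool set" L] by simp

lemma strings_ne: "{xs::bool list. length xs = L} \<noteq> {}"
proof -
  have "replicate L False \<in> {xs::bool list. length xs = L}" by simp
  thus ?thesis by blast
qed

lemma set_files: "set_pmf (files_pmf K L) = PiE_dflt {1..K} [] (\<lambda>_. {xs. length xs = L})"
  unfolding files_pmf_def
  by (simp add: set_Pi_pmf o_def set_pmf_of_set[OF strings_ne strings_finite])

lemma finite_files: "finite (set_pmf (files_pmf K L))"
  unfolding set_files by (rule finite_PiE_dflt) (auto simp: strings_finite)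

lemma files_memD:
  assumes "W \<in> set_pmf (files_pmf K L)"
  shows "\<And>j. j \<in> {1..K} \<Longrightarrow> length (W j) = L" "\<And>j. j \<notin> {1..K} \<Longrightarrow> W j = []"
  using assms unfolding set_files PiE_dflt_def by auto

lemma files_restrict:
  assumes "T \<subseteq> {1..K}"
  shows "map_pmf (rW T) (files_pmf K L) = Pi_pmf T [] (\<lambda>_. pmf_of_set {xs::bool list. length xs = L})"
  unfolding files_pmf_def rW_def
  by (rule Pi_pmf_subset[symmetric]) (use assms in auto)

lemma ent_files_restrict:
  assumes "T \<subseteq> {1..K}"
  shows "ent (map_pmf (rW T) (files_pmf K L)) = real L * real (card T)"
proof -
  let ?U = "pmf_of_set {xs::bool list. length xs = L}"
  let ?P = "Pi_pmf T [] (\<lambda>_. ?U)"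
  have finT: "finite T" using assms finite_subset by blast
  have finP: "finite (set_pmf ?P)"
    using finT by (simp add: set_Pi_pmf o_def set_pmf_of_set[OF strings_ne strings_finite])
      (rule finite_PiE_dflt, auto simp: strings_finite)
  have pm: "pmf ?P f = (1 / 2 ^ L) ^ card T" if "f \<in> set_pmf ?P" for f
  proof -
    have f: "f \<in> PiE_dflt T [] (\<lambda>_. {xs::bool list. length xs = L})"
      using that finT by (simp add: set_Pi_pmf o_def set_pmf_of_set[OF strings_ne strings_finite])
    hence "pmf ?P f = (\<Prod>x\<in>T. pmf ?U (f x))" using finT by (simp add: pmf_Pi PiE_dflt_def)
    also have "\<dots> = (\<Prod>x\<in>T. 1 / 2 ^ L)"
      using f by (intro prod.cong refl) (auto simp: PiE_dflt_def pmf_of_set[OF strings_ne strings_finite] strings_card)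
    finally show ?thesis by simp
  qed
  have lg: "- log 2 ((1 / 2 ^ L) ^ card T) = real L * real (card T)"
  proof -
    have "(1 / 2 ^ L) ^ card T = inverse ((2::real) ^ (L * card T))"
      by (simp add: power_mult power_one_over inverse_eq_divide)
    hence "log 2 ((1 / 2 ^ L) ^ card T) = - log 2 ((2::real) ^ (L * card T))" by (simp add: log_inverse)
    also have "\<dots> = - real (L * card T)" by (subst log_pow_cancel) auto
    finally show ?thesis by simp
  qed
  have "ent ?P = (\<Sum>f\<in>set_pmf ?P. pmf ?P f * (real L * real (card T)))"
    unfolding ent_alt by (intro sum.cong refl) (simp add: pm lg)
  also have "\<dots> = real L * real (card T)"
    using finP by (simp add: sum_distrib_right[symmetric] sum_pmf_eq_1)
  finally show ?thesis using files_restrict[OF assms] by simp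
qed

lemma ent_return: "ent (return_pmf c) = 0"
  unfolding ent_def by simp

lemma ent_map_const: "ent (map_pmf (\<lambda>_. c) p) = 0"
  by (simp add: map_pmf_const ent_return)

lemma rW_empty: "rW {} W = (\<lambda>_. [])"
  by (simp add: rW_def)

lemma rW_insert: "rW (insert i S) W = (rW S W)(i := W i)"
  by (auto simp: rW_def fun_eq_iff)

lemma vec_ent_le:
  assumes fin: "finite (set_pmf p)" and finR: "finite R"
  shows "ent (map_pmf (\<lambda>x. (\<lambda>j. if j \<in> R then f j x else (0::nat))) p) \<le> (\<Sum>j\<in>R. ent (map_pmf (f j) p))"
  using finR
proof (induction R rule: finite_induct)
  case empty
  show ?case by (simp add: ent_map_const ent_return)
next
  case (insert a R)
  have "ent (map_pmf (\<lambda>x. (\<lambda>j. if j \<in> insert a R then f j x else 0)) p)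
      \<le> ent (map_pmf (\<lambda>x. (f a x, (\<lambda>j. if j \<in> R then f j x else 0))) p)"
    by (rule ent_map_mono[OF fin, where \<phi> = "\<lambda>(z, v). v(a := z)"]) (auto simp: fun_eq_iff)
  also have "\<dots> \<le> ent (map_pmf (f a) p) + ent (map_pmf (\<lambda>x. (\<lambda>j. if j \<in> R then f j x else 0)) p)"
    by (rule ent_sub[OF fin])
  also have "\<dots> \<le> ent (map_pmf (f a) p) + (\<Sum>j\<in>R. ent (map_pmf (f j) p))"
    using insert.IH by simp
  finally show ?case using insert.hyps by simp
qed

lemma scheme_unfold:
  "is_star_pir_scheme N L \<mu> ans \<longleftrightarrow>
       finite (set_pmf \<mu>)
     \<and> map_pmf fst \<mu> = pmf_of_set {1..N-1}
     \<and> (\<forall>i\<in>{1..N}. \<forall>q W W'. (\<forall>j\<in>star_store N i. W j = W' j) \<longrightarrow> ans i q W = ans i q W')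
     \<and> (\<exists>dec. \<forall>(\<theta>, Q, W)\<in>set_pmf (pir_joint \<mu> (N-1) L).
            dec (\<lambda>i. if i \<in> {1..N} then ans i (Q i) W else 0)
                (\<lambda>i. if i \<in> {1..N} then Q i else 0) = W \<theta>)
     \<and> (\<forall>i\<in>{1..N}. cond_ent (pir_joint \<mu> (N-1) L) (\<lambda>(\<theta>, Q, W). \<theta>)
            (\<lambda>(\<theta>, Q, W). (Q i, \<lambda>j. if j \<in> star_store N i then W j else [])) = log 2 (real (N-1)))"
  unfolding is_star_pir_scheme_def Let_def by simp

lemma sch_parts:
  assumes "is_star_pir_scheme N L \<mu> ans"
  shows "finite (set_pmf \<mu>)"
    and "map_pmf fst \<mu> = pmf_of_set {1..N-1}"
    and "\<forall>i\<in>{1..N}. \<forall>q W W'. (\<forall>j\<in>star_store N i. W j = W' j) \<longrightarrow> ans i q W = ans i q W'"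
    and "\<exists>dec. \<forall>(\<theta>, Q, W)\<in>set_pmf (pir_joint \<mu> (N-1) L).
            dec (\<lambda>i. if i \<in> {1..N} then ans i (Q i) W else 0)
                (\<lambda>i. if i \<in> {1..N} then Q i else 0) = W \<theta>"
    and "\<forall>i\<in>{1..N}. cond_ent (pir_joint \<mu> (N-1) L) (\<lambda>(\<theta>, Q, W). \<theta>)
            (\<lambda>(\<theta>, Q, W). (Q i, \<lambda>j. if j \<in> star_store N i then W j else [])) = log 2 (real (N-1))"
proof -
  note h = scheme_unfold[THEN iffD1, OF assms]
  show "finite (set_pmf \<mu>)" by (rule conjunct1[OF h])
  show "map_pmf fst \<mu> = pmf_of_set {1..N-1}" by (rule conjunct1[OF conjunct2[OF h]])
  show "\<forall>i\<in>{1..N}. \<forall>q W W'. (\<forall>j\<in>star_store N i. W j = W' j) \<longrightarrow> ans i q W = ans i q W'"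
    by (rule conjunct1[OF conjunct2[OF conjunct2[OF h]]])
  show "\<exists>dec. \<forall>(\<theta>, Q, W)\<in>set_pmf (pir_joint \<mu> (N-1) L).
            dec (\<lambda>i. if i \<in> {1..N} then ans i (Q i) W else 0)
                (\<lambda>i. if i \<in> {1..N} then Q i else 0) = W \<theta>"
    by (rule conjunct1[OF conjunct2[OF conjunct2[OF conjunct2[OF h]]]])
  show "\<forall>i\<in>{1..N}. cond_ent (pir_joint \<mu> (N-1) L) (\<lambda>(\<theta>, Q, W). \<theta>)
            (\<lambda>(\<theta>, Q, W). (Q i, \<lambda>j. if j \<in> star_store N i then W j else [])) = log 2 (real (N-1))"
    by (rule conjunct2[OF conjunct2[OF conjunct2[OF conjunct2[OF h]]]])
qed

lemma sch_loc:
  assumes "is_star_pir_scheme N L \<mu> ans" "i \<in> {1..N}" "\<forall>j\<in>star_store N i. W j = W' j"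
  shows "ans i q W = ans i q W'"
proof -
  have "\<forall>q W W'. (\<forall>j\<in>star_store N i. W j = W' j) \<longrightarrow> ans i q W = ans i q W'"
    by (rule bspec[OF sch_parts(3)[OF assms(1)] assms(2)])
  thus ?thesis using assms(3) by simp
qed

lemma set_pir_joint:
  "set_pmf (pir_joint \<mu> K L) = {(\<theta>, Q, W). (\<theta>, Q) \<in> set_pmf \<mu> \<and> W \<in> set_pmf (files_pmf K L)}"
  unfolding pir_joint_def by (auto simp: set_bind_pmf)

lemma finite_pir_joint: "finite (set_pmf \<mu>) \<Longrightarrow> finite (set_pmf (pir_joint \<mu> K L))"
  unfolding pir_joint_def by (auto simp: set_bind_pmf finite_files intro!: finite_UN_I)

definition dl :: "nat \<Rightarrow> nat \<Rightarrow> (nat \<Rightarrow> nat \<Rightarrow> (nat \<Rightarrow> bool list) \<Rightarrow> nat) \<Rightarrow> nat \<Rightarrow> nat \<Rightarrow> real" where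
  "dl N L ans j v = ent (map_pmf (\<lambda>W. ans j v W) (files_pmf (N-1) L))"

definition hh :: "nat \<Rightarrow> nat \<Rightarrow> (nat \<Rightarrow> nat \<Rightarrow> (nat \<Rightarrow> bool list) \<Rightarrow> nat) \<Rightarrow> nat \<Rightarrow> nat set \<Rightarrow> real" where
  "hh N L ans v S = ent (map_pmf (\<lambda>W. (ans N v W, rW S W)) (files_pmf (N-1) L))
                   - ent (map_pmf (rW S) (files_pmf (N-1) L))"

lemma star_step:
  assumes sch: "is_star_pir_scheme N L \<mu> ans" and N2: "N \<ge> 2"
    and x: "(i, q) \<in> set_pmf \<mu>"
    and SR: "S \<subseteq> {1..N-1}" "R \<subseteq> {1..N-1}" "i \<notin> S" "i \<notin> R" "S \<inter> R = {}" "insert i (S \<union> R) = {1..N-1}"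
  shows "real L \<le> hh N L ans (q N) S - hh N L ans (q N) (insert i S) + dl N L ans i (q i) + (\<Sum>j\<in>R. dl N L ans j (q j))"
proof -
  let ?K = "N - 1"
  let ?F = "files_pmf ?K L"
  have fin: "finite (set_pmf ?F)" by (rule finite_files)
  have loc: "\<And>i q W W'. i \<in> {1..N} \<Longrightarrow> (\<forall>j\<in>star_store N i. W j = W' j) \<Longrightarrow> ans i q W = ans i q W'"
    using sch_loc[OF sch] by simp
  obtain dec where dec: "\<forall>(\<theta>, Q, W)\<in>set_pmf (pir_joint \<mu> ?K L).
            dec (\<lambda>i. if i \<in> {1..N} then ans i (Q i) W else 0)
                (\<lambda>i. if i \<in> {1..N} then Q i else 0) = W \<theta>"
    using sch_parts(4)[OF sch] by (elim exE) (rule that)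
  have iK: "i \<in> {1..?K}" using SR by blast
  have finS: "finite S" using SR(1) finite_subset by blast
  have finR: "finite R" using SR(2) finite_subset by blast
  define Qv where "Qv = (\<lambda>k. if k \<in> {1..N} then q k else 0)"
  define vecR where "vecR = (\<lambda>W. (\<lambda>j. if j \<in> R then ans j (q j) W else (0::nat)))"
  define Av where "Av = (\<lambda>zi (zR::nat\<Rightarrow>nat) g wS. (\<lambda>k. if k \<in> {1..N} then (if k = N then g else if k = i then zi
        else if k \<in> R then zR k else ans k (q k) wS) else 0))"
  have rec: "W i = dec (\<lambda>k. if k \<in> {1..N} then ans k (q k) W else 0) Qv" if "W \<in> set_pmf ?F" for W
  proof -
    have "(i, q, W) \<in> set_pmf (pir_joint \<mu> ?K L)" using x that by (simp add: set_pir_joint)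
    thus ?thesis using dec unfolding Qv_def by fastforce
  qed
  have avec: "(\<lambda>k. if k \<in> {1..N} then ans k (q k) W else 0) = Av (ans i (q i) W) (vecR W) (ans N (q N) W) (rW S W)" for W
  proof (rule ext)
    fix k
    show "(if k \<in> {1..N} then ans k (q k) W else 0) = Av (ans i (q i) W) (vecR W) (ans N (q N) W) (rW S W) k"
    proof (cases "k \<in> {1..N} \<and> k \<noteq> N \<and> k \<noteq> i \<and> k \<notin> R")
      case True
      hence k1: "k \<in> {1..N-1}" by auto
      hence "k \<in> insert i (S \<union> R)" by (subst SR(6))
      hence kS: "k \<in> S" using True by blast
      have ss: "star_store N k = {k}" using True by (simp add: star_store_def)
      have "ans k (q k) (rW S W) = ans k (q k) W"
        by (rule loc) (use True kS ss in \<open>auto simp: rW_def\<close>)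
      thus ?thesis using True by (simp add: Av_def)
    next
      case False
      thus ?thesis by (auto simp: Av_def vecR_def)
    qed
  qed
  define \<phi> where "\<phi> = (\<lambda>((zi, zR), (g, wS)). (g, (wS::nat\<Rightarrow>bool list)(i := dec (Av zi zR g wS) Qv)))"
  have a: "ent (map_pmf (\<lambda>W. (ans N (q N) W, rW (insert i S) W)) ?F)
      \<le> ent (map_pmf (\<lambda>W. ((ans i (q i) W, vecR W), (ans N (q N) W, rW S W))) ?F)"
  proof (rule ent_map_mono[OF fin, where \<phi> = \<phi>])
    fix W assume W: "W \<in> set_pmf ?F"
    show "(ans N (q N) W, rW (insert i S) W) = \<phi> ((ans i (q i) W, vecR W), ans N (q N) W, rW S W)"
    proof -
      from rec[OF W] have r: "W i = dec (Av (ans i (q i) W) (vecR W) (ans N (q N) W) (rW S W)) Qv"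
        by (simp only: avec)
      thus ?thesis by (simp add: \<phi>_def rW_insert)
    qed
  qed
  have b: "ent (map_pmf (\<lambda>W. ((ans i (q i) W, vecR W), (ans N (q N) W, rW S W))) ?F)
      \<le> ent (map_pmf (\<lambda>W. (ans i (q i) W, vecR W)) ?F) + ent (map_pmf (\<lambda>W. (ans N (q N) W, rW S W)) ?F)"
    by (rule ent_sub[OF fin])
  have c: "ent (map_pmf (\<lambda>W. (ans i (q i) W, vecR W)) ?F) \<le> ent (map_pmf (\<lambda>W. ans i (q i) W) ?F) + ent (map_pmf vecR ?F)"
    by (rule ent_sub[OF fin])
  have d: "ent (map_pmf vecR ?F) \<le> (\<Sum>j\<in>R. ent (map_pmf (\<lambda>W. ans j (q j) W) ?F))"
    unfolding vecR_def by (rule vec_ent_le[OF fin finR])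
  have d2: "(\<Sum>j\<in>R. ent (map_pmf (\<lambda>W. ans j (q j) W) ?F)) = (\<Sum>j\<in>R. dl N L ans j (q j))"
    by (simp add: dl_def)
  have d3: "ent (map_pmf (\<lambda>W. ans i (q i) W) ?F) = dl N L ans i (q i)" by (simp add: dl_def)
  have main: "ent (map_pmf (\<lambda>W. (ans N (q N) W, rW (insert i S) W)) ?F)
     \<le> dl N L ans i (q i) + (\<Sum>j\<in>R. dl N L ans j (q j)) + ent (map_pmf (\<lambda>W. (ans N (q N) W, rW S W)) ?F)"
    using a b c d d2 d3 by linarith
  have e1: "ent (map_pmf (rW (insert i S)) ?F) = real L * real (card (insert i S))"
    by (rule ent_files_restrict) (use SR iK in auto)
  have e2: "ent (map_pmf (rW S) ?F) = real L * real (card S)"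
    by (rule ent_files_restrict) (use SR in auto)
  have cS: "card (insert i S) = card S + 1" using finS SR(3) by simp
  have e3: "real L * real (card (insert i S)) = real L * real (card S) + real L" using cS by (simp add: algebra_simps)
  show ?thesis using main e1 e2 e3 unfolding hh_def by linarith
qed

lemma map_pir_joint:
  "map_pmf g (pir_joint \<mu> K L) = bind_pmf \<mu> (\<lambda>x. map_pmf (\<lambda>W. g (fst x, snd x, W)) (files_pmf K L))"
  unfolding pir_joint_def map_bind_pmf
  by (intro bind_pmf_cong refl) (auto simp: pmf.map_comp o_def split: prod.splits)

lemma map_pir_noW:
  "map_pmf (\<lambda>w. h (fst w) (fst (snd w))) (pir_joint \<mu> K L) = map_pmf (\<lambda>x. h (fst x) (snd x)) \<mu>"
  unfolding map_pir_joint by (simp add: map_pmf_const map_pmf_def)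

lemma sum_map_pmf:
  assumes "finite (set_pmf p)"
  shows "(\<Sum>x\<in>set_pmf p. pmf p x * G (f x)) = (\<Sum>y\<in>set_pmf (map_pmf f p). pmf (map_pmf f p) y * G y)"
proof -
  have "(\<Sum>x\<in>set_pmf p. pmf p x * G (f x))
      = (\<Sum>y\<in>f ` set_pmf p. \<Sum>x\<in>{x\<in>set_pmf p. f x = y}. pmf p x * G (f x))"
    using assms by (rule sum.image_gen)
  also have "\<dots> = (\<Sum>y\<in>f ` set_pmf p. (\<Sum>x\<in>{x\<in>set_pmf p. f x = y}. pmf p x) * G y)"
  proof (rule sum.cong[OF refl])
    fix y assume "y \<in> f ` set_pmf p"
    have "(\<Sum>x\<in>{x\<in>set_pmf p. f x = y}. pmf p x * G (f x)) = (\<Sum>x\<in>{x\<in>set_pmf p. f x = y}. pmf p x * G y)"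
      by (rule sum.cong) auto
    also have "\<dots> = (\<Sum>x\<in>{x\<in>set_pmf p. f x = y}. pmf p x) * G y"
      by (rule sum_distrib_right[symmetric])
    finally show "(\<Sum>x\<in>{x\<in>set_pmf p. f x = y}. pmf p x * G (f x)) = (\<Sum>x\<in>{x\<in>set_pmf p. f x = y}. pmf p x) * G y" .
  qed
  also have "\<dots> = (\<Sum>y\<in>f ` set_pmf p. pmf (map_pmf f p) y * G y)"
    using assms by (simp add: pmf_map_fiber)
  finally show ?thesis by simp
qed

lemma priv_indep:
  assumes sch: "is_star_pir_scheme N L \<mu> ans" and N2: "N \<ge> 2" and j: "j \<in> {1..N}"
  shows "map_pmf (\<lambda>x. (fst x, snd x j)) \<mu> = pair_pmf (pmf_of_set {1..N-1}) (map_pmf (\<lambda>x. snd x j) \<mu>)"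
proof -
  let ?K = "N - 1"
  let ?P = "pir_joint \<mu> ?K L"
  let ?X = "\<lambda>(\<theta>::nat, Q::nat\<Rightarrow>nat, W::nat\<Rightarrow>bool list). \<theta>"
  let ?Y = "\<lambda>(\<theta>::nat, Q::nat\<Rightarrow>nat, W::nat\<Rightarrow>bool list). (Q j, \<lambda>l. if l \<in> star_store N j then W l else [])"
  let ?T = "map_pmf (\<lambda>w. (?X w, ?Y w)) ?P"
  have finmu: "finite (set_pmf \<mu>)" by (rule sch_parts(1)[OF sch])
  have finT: "finite (set_pmf ?T)" using finite_pir_joint[OF finmu] by simp
  have ce: "cond_ent ?P ?X ?Y = log 2 (real ?K)" using sch_parts(5)[OF sch] j by blast
  have fstT: "map_pmf fst ?T = pmf_of_set {1..?K}"
  proof -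
    have "map_pmf fst ?T = map_pmf (\<lambda>w. fst w) ?P" by (simp add: pmf.map_comp o_def case_prod_beta)
    also have "\<dots> = map_pmf fst \<mu>" using map_pir_noW[of "\<lambda>a b. a" \<mu> ?K L] by simp
    also have "\<dots> = pmf_of_set {1..?K}" by (rule sch_parts(2)[OF sch])
    finally show ?thesis .
  qed
  have entU: "ent (pmf_of_set {1..?K}) = log 2 (real ?K)"
    using N2 by (subst ent_pmf_of_set) auto
  have sndT: "map_pmf snd ?T = map_pmf ?Y ?P" by (simp add: pmf.map_comp o_def)
  have "ent ?T = ent (map_pmf fst ?T) + ent (map_pmf snd ?T)"
    using ce unfolding cond_ent_def fstT entU sndT by simp
  hence T: "?T = pair_pmf (pmf_of_set {1..?K}) (map_pmf ?Y ?P)"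
    using mi_pair(2)[OF finT] fstT sndT by simp
  have "map_pmf (\<lambda>(a, b). (a, fst b)) ?T = map_pmf (\<lambda>w. (fst w, fst (snd w) j)) ?P"
    by (simp add: pmf.map_comp o_def case_prod_beta)
  also have "\<dots> = map_pmf (\<lambda>x. (fst x, snd x j)) \<mu>"
    using map_pir_noW[of "\<lambda>a b. (a, b j)" \<mu> ?K L] by simp
  finally have l: "map_pmf (\<lambda>(a, b). (a, fst b)) ?T = map_pmf (\<lambda>x. (fst x, snd x j)) \<mu>" .
  have "map_pmf (\<lambda>(a, b). (a, fst b)) (pair_pmf (pmf_of_set {1..?K}) (map_pmf ?Y ?P))
      = pair_pmf (map_pmf (\<lambda>a. a) (pmf_of_set {1..?K})) (map_pmf fst (map_pmf ?Y ?P))"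
    by (rule map_pair)
  also have "map_pmf fst (map_pmf ?Y ?P) = map_pmf (\<lambda>w. fst (snd w) j) ?P"
    by (simp add: pmf.map_comp o_def case_prod_beta)
  also have "\<dots> = map_pmf (\<lambda>x. snd x j) \<mu>"
    using map_pir_noW[of "\<lambda>a b. b j" \<mu> ?K L] by simp
  finally show ?thesis using l T by (simp add: map_pmf_ident)
qed

definition Ei :: "(nat \<times> (nat \<Rightarrow> nat)) pmf \<Rightarrow> nat \<Rightarrow> ((nat \<times> (nat \<Rightarrow> nat)) \<Rightarrow> real) \<Rightarrow> real" where
  "Ei \<mu> i f = (\<Sum>x\<in>set_pmf \<mu>. pmf \<mu> x * (if fst x = i then f x else 0))"

lemma Ei_add: "Ei \<mu> i (\<lambda>x. f x + g x) = Ei \<mu> i f + Ei \<mu> i g"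
  unfolding Ei_def by (simp only: sum.distrib[symmetric]) (intro sum.cong refl, simp add: algebra_simps)

lemma Ei_diff: "Ei \<mu> i (\<lambda>x. f x - g x) = Ei \<mu> i f - Ei \<mu> i g"
  unfolding Ei_def by (simp only: sum_subtractf[symmetric]) (intro sum.cong refl, simp add: algebra_simps)

lemma Ei_sum: "Ei \<mu> i (\<lambda>x. \<Sum>j\<in>R. f j x) = (\<Sum>j\<in>R. Ei \<mu> i (f j))"
  unfolding Ei_def
proof -
  have "(\<Sum>x\<in>set_pmf \<mu>. pmf \<mu> x * (if fst x = i then \<Sum>j\<in>R. f j x else 0))
      = (\<Sum>x\<in>set_pmf \<mu>. \<Sum>j\<in>R. pmf \<mu> x * (if fst x = i then f j x else 0))"
    by (intro sum.cong refl) (simp add: sum_distrib_left)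
  also have "\<dots> = (\<Sum>j\<in>R. \<Sum>x\<in>set_pmf \<mu>. pmf \<mu> x * (if fst x = i then f j x else 0))"
    by (rule sum.swap)
  finally show "(\<Sum>x\<in>set_pmf \<mu>. pmf \<mu> x * (if fst x = i then \<Sum>j\<in>R. f j x else 0))
      = (\<Sum>j\<in>R. \<Sum>x\<in>set_pmf \<mu>. pmf \<mu> x * (if fst x = i then f j x else 0))" .
qed

lemma Ei_mono:
  assumes "\<And>x. x \<in> set_pmf \<mu> \<Longrightarrow> fst x = i \<Longrightarrow> f x \<le> g x"
  shows "Ei \<mu> i f \<le> Ei \<mu> i g"
  unfolding Ei_def by (rule sum_mono) (use assms in \<open>auto intro: mult_left_mono\<close>)

lemma priv_sum:
  assumes sch: "is_star_pir_scheme N L \<mu> ans" and N2: "N \<ge> 2" and j: "j \<in> {1..N}" and i: "i \<in> {1..N-1}"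
  shows "Ei \<mu> i (\<lambda>x. \<phi> (snd x j)) = (\<Sum>x\<in>set_pmf \<mu>. pmf \<mu> x * \<phi> (snd x j)) / real (N - 1)"
proof -
  let ?K = "N - 1"
  let ?\<nu> = "map_pmf (\<lambda>x. snd x j) \<mu>"
  let ?J = "map_pmf (\<lambda>x. (fst x, snd x j)) \<mu>"
  have finmu: "finite (set_pmf \<mu>)" by (rule sch_parts(1)[OF sch])
  have finnu: "finite (set_pmf ?\<nu>)" using finmu by simp
  have J: "?J = pair_pmf (pmf_of_set {1..?K}) ?\<nu>" by (rule priv_indep[OF sch N2 j])
  have setU: "set_pmf (pmf_of_set {1..?K}) = {1..?K}" using N2 by (subst set_pmf_of_set) auto
  have "Ei \<mu> i (\<lambda>x. \<phi> (snd x j)) = (\<Sum>x\<in>set_pmf \<mu>. pmf \<mu> x * (\<lambda>(a, v). if a = i then \<phi> v else 0) ((\<lambda>x. (fst x, snd x j)) x))"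
    unfolding Ei_def by (intro sum.cong refl) auto
  also have "\<dots> = (\<Sum>y\<in>set_pmf ?J. pmf ?J y * (\<lambda>(a, v). if a = i then \<phi> v else 0) y)"
    by (rule sum_map_pmf[OF finmu])
  also have "\<dots> = (\<Sum>y\<in>{1..?K} \<times> set_pmf ?\<nu>. (1 / real ?K) * pmf ?\<nu> (snd y) * (if fst y = i then \<phi> (snd y) else 0))"
    unfolding J set_pair_pmf setU
    by (intro sum.cong refl) (auto simp: pmf_pair pmf_of_set)
  also have "\<dots> = (\<Sum>a\<in>{1..?K}. \<Sum>v\<in>set_pmf ?\<nu>. (1 / real ?K) * pmf ?\<nu> v * (if a = i then \<phi> v else 0))"
    by (subst sum.cartesian_product) (simp add: case_prod_beta)
  also have "\<dots> = (\<Sum>a\<in>{1..?K}. if a = i then (\<Sum>v\<in>set_pmf ?\<nu>. (1 / real ?K) * pmf ?\<nu> v * \<phi> v) else 0)"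
    by (intro sum.cong refl) auto
  also have "\<dots> = (\<Sum>v\<in>set_pmf ?\<nu>. (1 / real ?K) * pmf ?\<nu> v * \<phi> v)"
    using i by (simp add: sum.delta)
  also have "\<dots> = (\<Sum>v\<in>set_pmf ?\<nu>. pmf ?\<nu> v * \<phi> v) / real ?K"
    by (simp add: sum_divide_distrib)
  also have "(\<Sum>v\<in>set_pmf ?\<nu>. pmf ?\<nu> v * \<phi> v) = (\<Sum>x\<in>set_pmf \<mu>. pmf \<mu> x * \<phi> (snd x j))"
    by (rule sum_map_pmf[OF finmu, symmetric])
  finally show ?thesis .
qed

definition Hc :: "nat \<Rightarrow> nat \<Rightarrow> (nat \<times> (nat \<Rightarrow> nat)) pmf \<Rightarrow> (nat \<Rightarrow> nat \<Rightarrow> (nat \<Rightarrow> bool list) \<Rightarrow> nat) \<Rightarrow> nat set \<Rightarrow> real" where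
  "Hc N L \<mu> ans S = (\<Sum>x\<in>set_pmf \<mu>. pmf \<mu> x * hh N L ans (snd x N) S)"

definition dd :: "nat \<Rightarrow> nat \<Rightarrow> (nat \<times> (nat \<Rightarrow> nat)) pmf \<Rightarrow> (nat \<Rightarrow> nat \<Rightarrow> (nat \<Rightarrow> bool list) \<Rightarrow> nat) \<Rightarrow> nat \<Rightarrow> real" where
  "dd N L \<mu> ans j = (\<Sum>x\<in>set_pmf \<mu>. pmf \<mu> x * dl N L ans j (snd x j))"

lemma avg_step:
  assumes sch: "is_star_pir_scheme N L \<mu> ans" and N2: "N \<ge> 2"
    and SR: "S \<subseteq> {1..N-1}" "R \<subseteq> {1..N-1}" "i \<notin> S" "i \<notin> R" "S \<inter> R = {}" "insert i (S \<union> R) = {1..N-1}"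
  shows "real L \<le> Hc N L \<mu> ans S - Hc N L \<mu> ans (insert i S) + dd N L \<mu> ans i + (\<Sum>j\<in>R. dd N L \<mu> ans j)"
proof -
  let ?K = "N - 1"
  have iK: "i \<in> {1..?K}" using SR by blast
  have finmu: "finite (set_pmf \<mu>)" by (rule sch_parts(1)[OF sch])
  have Kpos: "real ?K > 0" using N2 by simp
  have NN: "N \<in> {1..N}" using N2 by simp
  have iN: "i \<in> {1..N}" using iK by auto
  have RN: "j \<in> {1..N}" if "j \<in> R" for j
  proof -
    have "j \<in> {1..N-1}" using SR(2) that by blast
    thus ?thesis by auto
  qed
  let ?A = "\<lambda>x::(nat \<times> (nat \<Rightarrow> nat)). hh N L ans (snd x N) S"
  let ?B = "\<lambda>x::(nat \<times> (nat \<Rightarrow> nat)). hh N L ans (snd x N) (insert i S)"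
  let ?C = "\<lambda>x::(nat \<times> (nat \<Rightarrow> nat)). dl N L ans i (snd x i)"
  let ?D = "\<lambda>j x::(nat \<times> (nat \<Rightarrow> nat)). dl N L ans j (snd x j)"
  have "Ei \<mu> i (\<lambda>x. real L) \<le> Ei \<mu> i (\<lambda>x. ?A x - ?B x + ?C x + (\<Sum>j\<in>R. ?D j x))"
  proof (rule Ei_mono)
    fix x assume x: "x \<in> set_pmf \<mu>" "fst x = i"
    have "(i, snd x) \<in> set_pmf \<mu>" using x by (metis prod.collapse)
    thus "real L \<le> ?A x - ?B x + ?C x + (\<Sum>j\<in>R. ?D j x)"
      using star_step[OF sch N2 _ SR] by simp
  qed
  also have "Ei \<mu> i (\<lambda>x. ?A x - ?B x + ?C x + (\<Sum>j\<in>R. ?D j x))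
      = Ei \<mu> i ?A - Ei \<mu> i ?B + Ei \<mu> i ?C + (\<Sum>j\<in>R. Ei \<mu> i (?D j))"
    by (simp only: Ei_add Ei_diff Ei_sum)
  also have "Ei \<mu> i ?A = Hc N L \<mu> ans S / ?K"
    unfolding Hc_def by (rule priv_sum[OF sch N2 NN iK])
  also have "Ei \<mu> i ?B = Hc N L \<mu> ans (insert i S) / ?K"
    unfolding Hc_def by (rule priv_sum[OF sch N2 NN iK])
  also have "Ei \<mu> i ?C = dd N L \<mu> ans i / ?K"
    unfolding dd_def by (rule priv_sum[OF sch N2 iN iK])
  also have "(\<Sum>j\<in>R. Ei \<mu> i (?D j)) = (\<Sum>j\<in>R. dd N L \<mu> ans j / ?K)"
    unfolding dd_def by (intro sum.cong refl priv_sum[OF sch N2 RN iK])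
  also have "Ei \<mu> i (\<lambda>x. real L) = real L / ?K"
  proof -
    have "Ei \<mu> i (\<lambda>x. (\<lambda>_. real L) (snd x N)) = (\<Sum>x\<in>set_pmf \<mu>. pmf \<mu> x * real L) / ?K"
      by (rule priv_sum[OF sch N2 NN iK])
    also have "(\<Sum>x\<in>set_pmf \<mu>. pmf \<mu> x * real L) = real L"
      using finmu by (simp add: sum_distrib_right[symmetric] sum_pmf_eq_1)
    finally show ?thesis by simp
  qed
  finally have "real L / ?K \<le> (Hc N L \<mu> ans S - Hc N L \<mu> ans (insert i S) + dd N L \<mu> ans i + (\<Sum>j\<in>R. dd N L \<mu> ans j)) / ?K"
    by (simp add: sum_divide_distrib add_divide_distrib diff_divide_distrib)
  thus ?thesis using Kpos by (simp add: divide_le_cancel)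
qed

lemma rW_empty': "rW {} = (\<lambda>W _. [])" by (auto simp: rW_def fun_eq_iff)

lemma hh_empty: "hh N L ans v {} = ent (map_pmf (ans N v) (files_pmf (N-1) L))"
proof -
  have "ent (map_pmf (\<lambda>W. (ans N v W, rW {} W)) (files_pmf (N-1) L)) = ent (map_pmf (ans N v) (files_pmf (N-1) L))"
    by (rule ent_map_eq[OF finite_files, where \<phi> = "\<lambda>g. (g, \<lambda>_. [])" and \<psi> = fst]) (auto simp: rW_empty)
  moreover have "ent (map_pmf (rW {}) (files_pmf (N-1) L)) = 0"
    by (simp add: rW_empty' ent_map_const ent_return)
  ultimately show ?thesis by (simp add: hh_def)
qed

lemma hh_full:
  assumes sch: "is_star_pir_scheme N L \<mu> ans" and N2: "N \<ge> 2"
  shows "hh N L ans v {1..N-1} = 0"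
proof -
  have loc: "ans N v W = ans N v (rW {1..N-1} W)" for W
    by (rule sch_loc[OF sch]) (use N2 in \<open>auto simp: star_store_def rW_def\<close>)
  have "ent (map_pmf (\<lambda>W. (ans N v W, rW {1..N-1} W)) (files_pmf (N-1) L)) = ent (map_pmf (rW {1..N-1}) (files_pmf (N-1) L))"
    by (rule ent_map_eq[OF finite_files, where \<phi> = "\<lambda>w. (ans N v w, w)" and \<psi> = snd]) (use loc in auto)
  thus ?thesis by (simp add: hh_def)
qed

lemma hh_le: "hh N L ans v S \<le> hh N L ans v {}"
proof -
  have "hh N L ans v S \<le> ent (map_pmf (ans N v) (files_pmf (N-1) L))"
    using ent_sub[OF finite_files[of "N-1" L], of "ans N v" "rW S"] unfolding hh_def by simp
  thus ?thesis by (simp only: hh_empty)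
qed

lemma Hc_full: assumes "is_star_pir_scheme N L \<mu> ans" "N \<ge> 2" shows "Hc N L \<mu> ans {1..N-1} = 0"
  unfolding Hc_def hh_full[OF assms] by simp

lemma Hc_le: "Hc N L \<mu> ans S \<le> Hc N L \<mu> ans {}"
  unfolding Hc_def by (rule sum_mono) (intro mult_left_mono hh_le, auto)

lemma dd_nonneg: "dd N L \<mu> ans j \<ge> 0"
  unfolding dd_def dl_def by (intro sum_nonneg mult_nonneg_nonneg ent_nonneg) auto

lemma ent_answer_ge:
  assumes fin: "finite (set_pmf \<mu>)"
  shows "dd N L \<mu> ans k \<le> ent (map_pmf (\<lambda>(\<theta>, Q, W). ans k (Q k) W) (pir_joint \<mu> (N-1) L))"
proof -
  have "map_pmf (\<lambda>(\<theta>, Q, W). ans k (Q k) W) (pir_joint \<mu> (N-1) L)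
      = bind_pmf \<mu> (\<lambda>x. map_pmf (\<lambda>W. ans k (snd x k) W) (files_pmf (N-1) L))"
    by (simp add: map_pir_joint)
  moreover have "(\<Sum>x\<in>set_pmf \<mu>. pmf \<mu> x * ent (map_pmf (\<lambda>W. ans k (snd x k) W) (files_pmf (N-1) L)))
      \<le> ent (bind_pmf \<mu> (\<lambda>x. map_pmf (\<lambda>W. ans k (snd x k) W) (files_pmf (N-1) L)))"
    by (rule ent_bind_ge[OF fin]) (simp add: finite_files)
  ultimately show ?thesis by (simp add: dd_def dl_def)
qed

lemma dd_N: "dd N L \<mu> ans N = Hc N L \<mu> ans {}"
  unfolding dd_def Hc_def dl_def hh_empty by simp

lemma denom_ge:
  assumes sch: "is_star_pir_scheme N L \<mu> ans" and N2: "N \<ge> 2"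
  shows "(\<Sum>j\<in>{1..N-1}. dd N L \<mu> ans j) + Hc N L \<mu> ans {}
     \<le> (\<Sum>k=1..N. ent (map_pmf (\<lambda>(\<theta>, Q, W). ans k (Q k) W) (pir_joint \<mu> (N-1) L)))"
proof -
  have fin: "finite (set_pmf \<mu>)" by (rule sch_parts(1)[OF sch])
  have "(\<Sum>j\<in>{1..N-1}. dd N L \<mu> ans j) + Hc N L \<mu> ans {} = (\<Sum>k=1..N. dd N L \<mu> ans k)"
  proof -
    have "{1..N} = insert N {1..N-1}" using N2 by auto
    hence "(\<Sum>k=1..N. dd N L \<mu> ans k) = dd N L \<mu> ans N + (\<Sum>k=1..N-1. dd N L \<mu> ans k)" using N2 by simp
    thus ?thesis by (simp add: dd_N)
  qed
  also have "\<dots> \<le> (\<Sum>k=1..N. ent (map_pmf (\<lambda>(\<theta>, Q, W). ans k (Q k) W) (pir_joint \<mu> (N-1) L)))"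
    by (intro sum_mono ent_answer_ge[OF fin])
  finally show ?thesis .
qed

lemma mod_inj_ivl: "inj_on (\<lambda>n::nat. n mod K + 1) {r..<r+K}"
proof (rule inj_onI)
  fix x y assume x: "x \<in> {r..<r+K}" and y: "y \<in> {r..<r+K}" and e: "x mod K + 1 = y mod K + 1"
  hence e': "x mod K = y mod K" by simp
  show "x = y"
  proof (cases "x \<le> y")
    case True
    hence "K dvd y - x" using e' mod_eq_dvd_iff_nat[of x y K] by simp
    moreover have "y - x < K" using x y by auto
    ultimately have "y - x = 0" by (metis dvd_imp_le not_less neq0_conv)
    thus ?thesis using True by simp
  next
    case False
    hence "K dvd x - y" using e' mod_eq_dvd_iff_nat[of y x K] by simp
    moreover have "x - y < K" using x y by auto
    ultimately have "x - y = 0" by (metis dvd_imp_le not_less neq0_conv)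
    thus ?thesis using False by simp
  qed
qed

lemma mod_image_ivl:
  assumes "K \<ge> 1" shows "(\<lambda>n::nat. n mod K + 1) ` {r..<r+K} = {1..K}"
proof (rule card_subset_eq)
  show "finite {1..K}" by simp
  show "(\<lambda>n. n mod K + 1) ` {r..<r + K} \<subseteq> {1..K}"
    using assms by (auto simp: Suc_le_eq)
  show "card ((\<lambda>n. n mod K + 1) ` {r..<r + K}) = card {1..K}"
    using mod_inj_ivl by (simp add: card_image)
qed

lemma sum_K_minus:
  assumes "m \<le> K" shows "(\<Sum>p\<in>{K-m..<K}. real (K - p)) = real m * (real m + 1) / 2"
  using assms
proof (induction m)
  case 0 thus ?case by simp
next
  case (Suc m)
  have "{K - Suc m..<K} = insert (K - Suc m) {K-m..<K}" using Suc.prems by auto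
  moreover have "K - Suc m \<notin> {K-m..<K}" using Suc.prems by auto
  ultimately have "(\<Sum>p\<in>{K - Suc m..<K}. real (K - p)) = real (K - (K - Suc m)) + (\<Sum>p\<in>{K-m..<K}. real (K - p))"
    by simp
  also have "\<dots> = real (Suc m) + real m * (real m + 1) / 2" using Suc by simp
  finally show ?case by (simp add: algebra_simps add_divide_distrib)
qed

lemma comb:
  fixes Hc :: "nat set \<Rightarrow> real" and d :: "nat \<Rightarrow> real" and K m :: nat and L a :: real
  assumes K1: "K \<ge> 1" and m1: "1 \<le> m" and mK: "m \<le> K"
   and step: "\<And>i S R. S \<subseteq> {1..K} \<Longrightarrow> R \<subseteq> {1..K} \<Longrightarrow> i \<notin> S \<Longrightarrow> i \<notin> R \<Longrightarrow> S \<inter> R = {}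
              \<Longrightarrow> insert i (S \<union> R) = {1..K} \<Longrightarrow> L \<le> Hc S - Hc (insert i S) + d i + sum d R"
   and full: "Hc {1..K} = 0" and le: "\<And>S. Hc S \<le> a"
  shows "real K * real m * L \<le> real K * a + (\<Sum>j\<in>{1..K}. d j) * (real m * (real m + 1) / 2)"
proof -
  define e where "e = (\<lambda>n::nat. n mod K + 1)"
  define P where "P = (\<lambda>r p. e ` {r..<r+p})"
  define D where "D = (\<Sum>j\<in>{1..K}. d j)"
  have inj: "inj_on e {r..<r+K}" for r unfolding e_def by (rule mod_inj_ivl)
  have img: "e ` {r..<r+K} = {1..K}" for r unfolding e_def using K1 by (rule mod_image_ivl)
  have st: "L \<le> Hc (P r p) - Hc (P r (Suc p)) + (\<Sum>n\<in>{r+p..<r+K}. d (e n))" if p: "p < K" for r p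
  proof -
    let ?S = "P r p" and ?R = "e ` {r+p+1..<r+K}" and ?i = "e (r+p)"
    have sub1: "{r..<r+p} \<subseteq> {r..<r+K}" and sub2: "{r+p+1..<r+K} \<subseteq> {r..<r+K}" and mem: "r+p \<in> {r..<r+K}"
      using p by auto
    have S1: "?S \<subseteq> {1..K}" unfolding P_def using img[of r] sub1 by blast
    have R1: "?R \<subseteq> {1..K}" using img[of r] sub2 by blast
    have iS: "?i \<notin> ?S" unfolding P_def using inj_on_image_mem_iff[OF inj mem sub1] by simp
    have iR: "?i \<notin> ?R" using inj_on_image_mem_iff[OF inj mem sub2] by simp
    have SR: "?S \<inter> ?R = {}"
      unfolding P_def using inj_on_image_Int[OF inj sub1 sub2] by auto
    have "insert (r+p) ({r..<r+p} \<union> {r+p+1..<r+K}) = {r..<r+K}" using p by auto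
    hence ins: "insert ?i (?S \<union> ?R) = {1..K}" unfolding P_def using img[of r] by (metis image_Un image_insert)
    have sR: "sum d ?R = (\<Sum>n\<in>{r+p+1..<r+K}. d (e n))"
      by (rule sum.reindex_cong[OF inj_on_subset[OF inj sub2] refl refl])
    have "(\<Sum>n\<in>{r+p..<r+K}. d (e n)) = d ?i + (\<Sum>n\<in>{r+p+1..<r+K}. d (e n))"
    proof -
      have "{r+p..<r+K} = insert (r+p) {r+p+1..<r+K}" using p by auto
      thus ?thesis by simp
    qed
    moreover have "P r (Suc p) = insert ?i ?S" unfolding P_def by (simp add: atLeastLessThanSuc)
    ultimately show ?thesis using step[OF S1 R1 iS iR SR ins] sR by simp
  qed
  have P0: "P r K = {1..K}" for r unfolding P_def using img by simp
  have stm: "real m * L \<le> a + (\<Sum>p\<in>{K-m..<K}. \<Sum>n\<in>{r+p..<r+K}. d (e n))" for r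
  proof -
    have "(\<Sum>p\<in>{K-m..<K}. L) \<le> (\<Sum>p\<in>{K-m..<K}. Hc (P r p) - Hc (P r (Suc p)) + (\<Sum>n\<in>{r+p..<r+K}. d (e n)))"
      by (rule sum_mono) (rule st, auto)
    also have "\<dots> = (\<Sum>p\<in>{K-m..<K}. Hc (P r p) - Hc (P r (Suc p))) + (\<Sum>p\<in>{K-m..<K}. \<Sum>n\<in>{r+p..<r+K}. d (e n))"
      by (rule sum.distrib)
    also have "(\<Sum>p\<in>{K-m..<K}. Hc (P r p) - Hc (P r (Suc p))) = Hc (P r (K-m)) - Hc (P r K)"
    proof -
      have "(\<Sum>p\<in>{K-m..<K}. (- Hc (P r (Suc p))) - (- Hc (P r p))) = (- Hc (P r K)) - (- Hc (P r (K-m)))"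
        by (rule sum_Suc_diff') simp
      thus ?thesis by (simp add: algebra_simps)
    qed
    also have "\<dots> \<le> a" using le[of "P r (K-m)"] P0[of r] full by simp
    finally show ?thesis using mK by simp
  qed
  have inner: "(\<Sum>r<K. d (e (r + s))) = D" for s
  proof -
    have "(\<Sum>r<K. d (e (r + s))) = (\<Sum>n\<in>{s..<s+K}. d (e n))"
    proof -
      have "(\<Sum>n\<in>{0+s..<K+s}. d (e n)) = (\<Sum>r\<in>{0..<K}. d (e (r + s)))"
        by (rule sum.shift_bounds_nat_ivl)
      thus ?thesis by (simp add: lessThan_atLeast0 add.commute)
    qed
    also have "\<dots> = (\<Sum>j\<in>e ` {s..<s+K}. d j)"
      by (rule sum.reindex_cong[OF inj refl refl, symmetric])
    also have "\<dots> = D" unfolding img D_def by simp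
    finally show ?thesis .
  qed
  have "(\<Sum>r<K. real m * L) \<le> (\<Sum>r<K. a + (\<Sum>p\<in>{K-m..<K}. \<Sum>n\<in>{r+p..<r+K}. d (e n)))"
    by (rule sum_mono) (rule stm)
  also have "\<dots> = real K * a + (\<Sum>r<K. \<Sum>p\<in>{K-m..<K}. \<Sum>n\<in>{r+p..<r+K}. d (e n))"
    by (simp add: sum.distrib)
  also have "(\<Sum>r<K. \<Sum>p\<in>{K-m..<K}. \<Sum>n\<in>{r+p..<r+K}. d (e n))
      = (\<Sum>r<K. \<Sum>p\<in>{K-m..<K}. \<Sum>s\<in>{p..<K}. d (e (s + r)))"
  proof (rule sum.cong[OF refl], rule sum.cong[OF refl])
    fix r p
    show "(\<Sum>n\<in>{r+p..<r+K}. d (e n)) = (\<Sum>s\<in>{p..<K}. d (e (s + r)))"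
      using sum.shift_bounds_nat_ivl[of "\<lambda>n. d (e n)" p r K] by (simp add: add.commute)
  qed
  also have "\<dots> = (\<Sum>p\<in>{K-m..<K}. \<Sum>s\<in>{p..<K}. \<Sum>r<K. d (e (r + s)))"
    by (simp add: sum.swap[of _ "{..<K}"] add.commute)
  also have "\<dots> = (\<Sum>p\<in>{K-m..<K}. real (K - p) * D)"
    by (simp add: inner)
  also have "\<dots> = (\<Sum>p\<in>{K-m..<K}. real (K - p)) * D" by (rule sum_distrib_right[symmetric])
  also have "\<dots> = D * (real m * (real m + 1) / 2)" by (simp only: sum_K_minus[OF mK] mult.commute)
  finally show ?thesis by (simp add: D_def mult.commute mult.left_commute)
qed

definition Tden :: "nat \<Rightarrow> nat \<Rightarrow> (nat \<times> (nat \<Rightarrow> nat)) pmf \<Rightarrow> (nat \<Rightarrow> nat \<Rightarrow> (nat \<Rightarrow> bool list) \<Rightarrow> nat) \<Rightarrow> real" where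
  "Tden N L \<mu> ans = (\<Sum>i=1..N. ent (map_pmf (\<lambda>(\<theta>, Q, W). ans i (Q i) W) (pir_joint \<mu> (N - 1) L)))"

lemma rate_Tden: "pir_rate N L \<mu> ans = real L / Tden N L \<mu> ans"
  unfolding pir_rate_def Tden_def by simp

lemma conv_main:
  assumes sch: "is_star_pir_scheme N L \<mu> ans" and N2: "N \<ge> 2" and m1: "1 \<le> m" and mK: "m \<le> N - 1"
  shows "real (N-1) * real m * real L \<le> (real (N-1) + real m * (real m + 1) / 2) * Tden N L \<mu> ans"
proof -
  let ?K = "N - 1"
  let ?D = "\<Sum>j\<in>{1..?K}. dd N L \<mu> ans j"
  let ?a = "Hc N L \<mu> ans {}"
  have c: "real ?K * real m * real L \<le> real ?K * ?a + ?D * (real m * (real m + 1) / 2)"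
  proof (rule comb[where Hc = "Hc N L \<mu> ans" and d = "dd N L \<mu> ans"])
    show "1 \<le> ?K" using N2 by simp
    show "1 \<le> m" by (rule m1)
    show "m \<le> ?K" by (rule mK)
    show "Hc N L \<mu> ans {1..?K} = 0" by (rule Hc_full[OF sch N2])
    show "\<And>S. Hc N L \<mu> ans S \<le> ?a" by (rule Hc_le)
    fix i S R
    assume "S \<subseteq> {1..?K}" "R \<subseteq> {1..?K}" "i \<notin> S" "i \<notin> R" "S \<inter> R = {}" "insert i (S \<union> R) = {1..?K}"
    thus "real L \<le> Hc N L \<mu> ans S - Hc N L \<mu> ans (insert i S) + dd N L \<mu> ans i + sum (dd N L \<mu> ans) R"
      by (rule avg_step[OF sch N2])
  qed
  have den: "?D + ?a \<le> Tden N L \<mu> ans" unfolding Tden_def by (rule denom_ge[OF sch N2])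
  have D0: "?D \<ge> 0" by (intro sum_nonneg dd_nonneg)
  have a0: "?a \<ge> 0" using dd_nonneg[of N L \<mu> ans N] by (simp add: dd_N)
  define q where "q = real m * (real m + 1) / 2"
  define T where "T = Tden N L \<mu> ans"
  have q0: "q \<ge> 0" unfolding q_def by simp
  have h1: "real ?K * ?a \<le> real ?K * T" using den D0 unfolding T_def by (intro mult_left_mono) auto
  have h2: "?D * q \<le> T * q" using den a0 q0 unfolding T_def by (intro mult_right_mono) auto
  have h3: "(real ?K + q) * T = real ?K * T + T * q" by (simp add: algebra_simps)
  have "real ?K * real m * real L \<le> real ?K * ?a + ?D * q" using c unfolding q_def .
  hence "real ?K * real m * real L \<le> (real ?K + q) * T" using h1 h2 h3 by linarith
  thus ?thesis unfolding q_def T_def .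
qed

lemma Tden_pos:
  assumes sch: "is_star_pir_scheme N L \<mu> ans" and N2: "N \<ge> 2" and L1: "L \<ge> 1"
  shows "Tden N L \<mu> ans > 0"
proof (rule ccontr)
  define k where "k = real (N-1)"
  define T where "T = Tden N L \<mu> ans"
  assume "\<not> Tden N L \<mu> ans > 0"
  hence T0: "T \<le> 0" unfolding T_def by simp
  have "real (N-1) * real 1 * real L \<le> (real (N-1) + real 1 * (real 1 + 1) / 2) * Tden N L \<mu> ans"
    by (rule conv_main[OF sch N2]) (use N2 in auto)
  hence h: "k * real L \<le> (k + 1) * T" unfolding k_def[symmetric] T_def[symmetric] by simp
  have k1: "k \<ge> 1" unfolding k_def using N2 by simp
  have "(k + 1) * T \<le> 0" using k1 T0 by (intro mult_nonneg_nonpos) auto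
  moreover have "k * real L > 0" using k1 L1 by simp
  ultimately show False using h by linarith
qed

lemma rate_le_m:
  assumes sch: "is_star_pir_scheme N L \<mu> ans" and N2: "N \<ge> 2" and L1: "L \<ge> 1" and m1: "1 \<le> m" and mK: "m \<le> N - 1"
  shows "pir_rate N L \<mu> ans \<le> (real (N-1) + real m * (real m + 1) / 2) / (real (N-1) * real m)"
proof -
  define T where "T = Tden N L \<mu> ans"
  define X where "X = real (N-1) + real m * (real m + 1) / 2"
  define Y where "Y = real (N-1) * real m"
  have T: "T > 0" unfolding T_def by (rule Tden_pos[OF sch N2 L1])
  have Km: "Y > 0" unfolding Y_def using N2 m1 by simp
  have c: "Y * real L \<le> X * T" unfolding X_def Y_def T_def by (rule conv_main[OF sch N2 m1 mK])
  have "real L \<le> X * T / Y" using c Km by (simp add: pos_le_divide_eq mult.commute)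
  hence "real L / T \<le> X / Y" using T Km by (simp add: pos_divide_le_eq mult.commute)
  thus ?thesis unfolding rate_Tden T_def[symmetric] X_def Y_def .
qed

lemma sqrt_bound:
  fixes K :: nat assumes K4: "K \<ge> 4"
  shows "(real K + real (nat \<lfloor>sqrt K\<rfloor>) * (real (nat \<lfloor>sqrt K\<rfloor>) + 1) / 2) / (real K * real (nat \<lfloor>sqrt K\<rfloor>)) \<le> 3 / sqrt K"
    and "1 \<le> nat \<lfloor>sqrt K\<rfloor>" and "nat \<lfloor>sqrt K\<rfloor> \<le> K"
proof -
  define s where "s = sqrt (real K)"
  define m where "m = nat \<lfloor>s\<rfloor>"
  have s2: "s \<ge> 2" unfolding s_def using K4 real_sqrt_le_mono[of 4 "real K"] by simp
  have ss: "s * s = real K" unfolding s_def by simp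
  have fl: "real m \<le> s" "s < real m + 1" unfolding m_def using s2 by linarith+
  have m2: "real m \<ge> s / 2" using fl s2 by linarith
  have mpos: "real m > 0" using m2 s2 by linarith
  have m1: "1 \<le> m" using mpos by simp
  thus "1 \<le> nat \<lfloor>sqrt K\<rfloor>" by (simp add: m_def s_def)
  have "s * 1 \<le> s * s" using s2 by (intro mult_left_mono) auto
  hence "real m \<le> real K" using fl ss by linarith
  hence "m \<le> K" by simp
  thus "nat \<lfloor>sqrt K\<rfloor> \<le> K" by (simp add: m_def s_def)
  have e: "(real K + real m * (real m + 1) / 2) / (real K * real m) = 1 / real m + (real m + 1) / (2 * real K)"
    using mpos K4 by (simp add: field_simps)
  have t1: "1 / real m \<le> 2 / s" using m2 mpos s2 by (simp add: field_simps)
  have t2: "(real m + 1) / (2 * real K) \<le> 1 / s"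
  proof -
    have "real m + 1 \<le> 2 * s" using fl s2 by linarith
    hence "(real m + 1) / (2 * real K) \<le> 2 * s / (2 * real K)" using K4 by (intro divide_right_mono) auto
    also have "\<dots> = 1 / s" using ss s2 K4 by (simp add: field_simps)
    finally show ?thesis .
  qed
  show "(real K + real (nat \<lfloor>sqrt K\<rfloor>) * (real (nat \<lfloor>sqrt K\<rfloor>) + 1) / 2) / (real K * real (nat \<lfloor>sqrt K\<rfloor>)) \<le> 3 / sqrt K"
    using e t1 t2 unfolding m_def s_def by simp
qed

lemma rate_upper:
  assumes sch: "is_star_pir_scheme N L \<mu> ans" and N5: "N \<ge> 5" and L1: "L \<ge> 1"
  shows "pir_rate N L \<mu> ans \<le> 5 / sqrt N"
proof -
  let ?K = "N - 1"
  let ?m = "nat \<lfloor>sqrt (real ?K)\<rfloor>"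
  have K4: "?K \<ge> 4" using N5 by simp
  note sb = sqrt_bound[OF K4]
  have "pir_rate N L \<mu> ans \<le> (real ?K + real ?m * (real ?m + 1) / 2) / (real ?K * real ?m)"
    by (rule rate_le_m[OF sch _ L1 sb(2) sb(3)]) (use N5 in auto)
  also have "\<dots> \<le> 3 / sqrt ?K" by (rule sb(1))
  also have "\<dots> \<le> 5 / sqrt N"
  proof -
    have "9 * real N \<le> 25 * real ?K" using N5 by simp
    hence "sqrt (9 * real N) \<le> sqrt (25 * real ?K)" by simp
    hence "3 * sqrt N \<le> 5 * sqrt ?K" by (simp add: real_sqrt_mult)
    moreover have "sqrt ?K > 0" "sqrt N > 0" using N5 by auto
    ultimately show ?thesis by (simp add: field_simps)
  qed
  finally show ?thesis .
qed

lemma pair_as_bind: "pair_pmf A B = bind_pmf A (\<lambda>x. map_pmf (Pair x) B)"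
  by (simp add: pair_pmf_def map_pmf_def)

lemma indep_pair:
  assumes "\<And>a. a \<in> set_pmf A \<Longrightarrow> map_pmf (f a) B = \<nu>"
  shows "map_pmf (\<lambda>(a, b). (a, f a b)) (pair_pmf A B) = pair_pmf A \<nu>"
  unfolding pair_as_bind map_bind_pmf
proof (rule bind_pmf_cong[OF refl])
  fix a assume a: "a \<in> set_pmf A"
  have "map_pmf (\<lambda>(a, b). (a, f a b)) (map_pmf (Pair a) B) = map_pmf (Pair a) (map_pmf (f a) B)"
    by (simp add: pmf.map_comp o_def)
  thus "map_pmf (\<lambda>(a, b). (a, f a b)) (map_pmf (Pair a) B) = map_pmf (Pair a) \<nu>" using assms[OF a] by simp
qed

definition Perms :: "nat \<Rightarrow> (nat \<Rightarrow> nat) set" where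
  "Perms K = {\<sigma>. \<sigma> permutes {1..K}}"

lemma Perms_finite: "finite (Perms K)"
  unfolding Perms_def by (rule finite_permutations) simp

lemma Perms_ne: "Perms K \<noteq> {}"
  unfolding Perms_def using permutes_id by blast

lemma perm_sym:
  assumes A: "finite A" and ij: "i \<in> A" "j \<in> A" "i \<noteq> j" and ij': "i' \<in> A" "j' \<in> A" "i' \<noteq> j'"
  shows "map_pmf (\<lambda>\<sigma>. (\<sigma> i, \<sigma> j)) (pmf_of_set {\<sigma>. \<sigma> permutes A}) = map_pmf (\<lambda>\<sigma>. (\<sigma> i', \<sigma> j')) (pmf_of_set {\<sigma>. \<sigma> permutes A})"
proof -
  define j1 where "j1 = Transposition.transpose i' i j'"
  define \<tau> where "\<tau> = Transposition.transpose j1 j \<circ> Transposition.transpose i' i"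
  have j1A: "j1 \<in> A" unfolding j1_def using ij ij' by (auto simp: Transposition.transpose_def)
  have j1i: "j1 \<noteq> i" unfolding j1_def using ij' by (auto simp: Transposition.transpose_def)
  have tp: "\<tau> permutes A" unfolding \<tau>_def
    by (rule permutes_compose) (rule permutes_swap_id, use ij ij' j1A in auto)+
  have ti: "\<tau> i' = i" unfolding \<tau>_def using j1i ij by (auto simp: Transposition.transpose_def)
  have tj: "\<tau> j' = j" unfolding \<tau>_def j1_def by (auto simp: Transposition.transpose_def)
  let ?P = "{\<sigma>. \<sigma> permutes A}"
  have finP: "finite ?P" using A by (rule finite_permutations)
  have neP: "?P \<noteq> {}" using permutes_id by blast
  have bij: "bij_betw (\<lambda>\<sigma>. \<sigma> \<circ> \<tau>) ?P ?P"
  proof (rule bij_betw_byWitness[where f' = "\<lambda>\<sigma>. \<sigma> \<circ> inv \<tau>"])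
    show "\<forall>a\<in>?P. a \<circ> \<tau> \<circ> inv \<tau> = a" using permutes_inv_o(1)[OF tp] by (simp add: o_assoc[symmetric])
    show "\<forall>a\<in>?P. a \<circ> inv \<tau> \<circ> \<tau> = a" using permutes_inv_o(2)[OF tp] by (simp add: o_assoc[symmetric])
    show "(\<lambda>\<sigma>. \<sigma> \<circ> \<tau>) ` ?P \<subseteq> ?P" using tp by (auto intro: permutes_compose)
    show "(\<lambda>\<sigma>. \<sigma> \<circ> inv \<tau>) ` ?P \<subseteq> ?P" using permutes_inv[OF tp] by (auto intro: permutes_compose)
  qed
  have U: "map_pmf (\<lambda>\<sigma>. \<sigma> \<circ> \<tau>) (pmf_of_set ?P) = pmf_of_set ?P"
    by (rule map_pmf_of_set_bij_betw[OF bij neP finP])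
  have "map_pmf (\<lambda>\<sigma>. (\<sigma> i', \<sigma> j')) (pmf_of_set ?P) = map_pmf (\<lambda>\<sigma>. (\<sigma> i', \<sigma> j')) (map_pmf (\<lambda>\<sigma>. \<sigma> \<circ> \<tau>) (pmf_of_set ?P))"
    by (simp add: U)
  also have "\<dots> = map_pmf (\<lambda>\<sigma>. (\<sigma> i, \<sigma> j)) (pmf_of_set ?P)"
    by (simp add: pmf.map_comp o_def ti tj)
  finally show ?thesis by simp
qed

definition beta :: "nat \<Rightarrow> nat \<Rightarrow> real" where
  "beta K g = measure_pmf.prob (pmf_of_set (Perms K)) {\<sigma>. \<sigma> 2 div g = \<sigma> 1 div g}"

lemma beta_01: "0 \<le> beta K g" "beta K g \<le> 1"
  unfolding beta_def by auto

lemma bool_pmf_eq: "pmf p True = pmf q True \<Longrightarrow> p = (q :: bool pmf)"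
  by (rule pmf_eqI) (metis (full_types) pmf_False_conv_True)

lemma same_blk_law:
  assumes K2: "K \<ge> 2" and i: "i \<in> {1..K}" and j: "j \<in> {1..K}" and ji: "j \<noteq> i"
  shows "map_pmf (\<lambda>\<sigma>. \<sigma> j div g = \<sigma> i div g) (pmf_of_set (Perms K)) = bernoulli_pmf (beta K g)"
proof -
  have "map_pmf (\<lambda>\<sigma>. \<sigma> j div g = \<sigma> i div g) (pmf_of_set (Perms K))
      = map_pmf (\<lambda>(a, b). a div g = b div g) (map_pmf (\<lambda>\<sigma>. (\<sigma> j, \<sigma> i)) (pmf_of_set (Perms K)))"
    by (simp add: pmf.map_comp o_def)
  also have "map_pmf (\<lambda>\<sigma>. (\<sigma> j, \<sigma> i)) (pmf_of_set (Perms K)) = map_pmf (\<lambda>\<sigma>. (\<sigma> 2, \<sigma> 1)) (pmf_of_set (Perms K))"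
    unfolding Perms_def by (rule perm_sym) (use K2 i j ji in auto)
  also have "map_pmf (\<lambda>(a, b). a div g = b div g) \<dots> = map_pmf (\<lambda>\<sigma>. \<sigma> 2 div g = \<sigma> 1 div g) (pmf_of_set (Perms K))"
    by (simp add: pmf.map_comp o_def)
  also have "\<dots> = bernoulli_pmf (beta K g)"
  proof (rule bool_pmf_eq)
    have "pmf (map_pmf (\<lambda>\<sigma>. \<sigma> 2 div g = \<sigma> 1 div g) (pmf_of_set (Perms K))) True
        = measure_pmf.prob (pmf_of_set (Perms K)) {\<sigma>. \<sigma> 2 div g = \<sigma> 1 div g}"
      by (simp add: pmf_map vimage_def)
    thus "pmf (map_pmf (\<lambda>\<sigma>. \<sigma> 2 div g = \<sigma> 1 div g) (pmf_of_set (Perms K))) True = pmf (bernoulli_pmf (beta K g)) True"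
      using beta_01 by (simp add: beta_def)
  qed
  finally show ?thesis .
qed

lemma prob_same_blk:
  assumes K2: "K \<ge> 2" and j: "j \<in> {2..K}"
  shows "measure_pmf.prob (pmf_of_set (Perms K)) {\<sigma>. \<sigma> j div g = \<sigma> 1 div g} = beta K g"
proof -
  have "measure_pmf.prob (pmf_of_set (Perms K)) {\<sigma>. \<sigma> j div g = \<sigma> 1 div g}
      = pmf (map_pmf (\<lambda>\<sigma>. \<sigma> j div g = \<sigma> 1 div g) (pmf_of_set (Perms K))) True"
    by (simp add: pmf_map vimage_def)
  also have "\<dots> = pmf (bernoulli_pmf (beta K g)) True"
    by (subst same_blk_law[OF K2]) (use j K2 in auto)
  also have "\<dots> = beta K g" using beta_01 by simp
  finally show ?thesis .
qed

lemma card_blk_le: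
  assumes sp: "\<sigma> permutes {1..K}" and g: "g \<ge> 1"
  shows "card {j\<in>{1..K}. \<sigma> j div g = b} \<le> g"
proof -
  have "card {j\<in>{1..K}. \<sigma> j div g = b} \<le> card {b*g..<b*g+g}"
  proof (rule card_inj_on_le)
    show "inj_on \<sigma> {j\<in>{1..K}. \<sigma> j div g = b}" using permutes_inj_on[OF sp] .
    show "\<sigma> ` {j\<in>{1..K}. \<sigma> j div g = b} \<subseteq> {b*g..<b*g+g}"
    proof
      fix n assume "n \<in> \<sigma> ` {j\<in>{1..K}. \<sigma> j div g = b}"
      then obtain j where "n = \<sigma> j" "\<sigma> j div g = b" by auto
      hence nb: "n div g = b" by simp
      have "n = n div g * g + n mod g" by simp
      moreover have "n mod g < g" using g by simp
      ultimately show "n \<in> {b*g..<b*g+g}" using nb by (auto simp: algebra_simps)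
    qed
  qed simp
  thus ?thesis by simp
qed

lemma beta_bound:
  assumes K2: "K \<ge> 2" and g: "g \<ge> 1"
  shows "real (K - 1) * beta K g \<le> real g - 1"
proof -
  let ?P = "Perms K"
  let ?E = "\<lambda>j. {\<sigma>. \<sigma> j div g = \<sigma> 1 div g}"
  have cP: "real (card ?P) > 0" using Perms_finite Perms_ne by (simp add: card_gt_0_iff)
  have "real (K - 1) * beta K g = (\<Sum>j\<in>{2..K}. beta K g)" by simp
  also have "\<dots> = (\<Sum>j\<in>{2..K}. measure_pmf.prob (pmf_of_set ?P) (?E j))"
    by (intro sum.cong refl prob_same_blk[symmetric] K2)
  also have "\<dots> = (\<Sum>j\<in>{2..K}. real (card (?P \<inter> ?E j)) / real (card ?P))"
    by (intro sum.cong refl measure_pmf_of_set Perms_ne Perms_finite)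
  also have "\<dots> = (\<Sum>j\<in>{2..K}. \<Sum>\<sigma>\<in>?P. if \<sigma> \<in> ?E j then 1 else 0) / real (card ?P)"
  proof -
    have "real (card (?P \<inter> ?E j)) = (\<Sum>\<sigma>\<in>?P. if \<sigma> \<in> ?E j then 1 else 0)" for j
    proof -
      have "?P \<inter> ?E j = {\<sigma>\<in>?P. \<sigma> \<in> ?E j}" by auto
      hence "real (card (?P \<inter> ?E j)) = (\<Sum>\<sigma>\<in>{\<sigma>\<in>?P. \<sigma> \<in> ?E j}. 1)" by simp
      also have "\<dots> = (\<Sum>\<sigma>\<in>?P. if \<sigma> \<in> ?E j then 1 else 0)" by (rule sum.inter_filter[OF Perms_finite])
      finally show ?thesis .
    qed
    thus ?thesis by (simp add: sum_divide_distrib)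
  qed
  also have "\<dots> = (\<Sum>\<sigma>\<in>?P. \<Sum>j\<in>{2..K}. if \<sigma> \<in> ?E j then 1 else 0) / real (card ?P)"
    by (subst sum.swap) simp
  also have "\<dots> \<le> (\<Sum>\<sigma>\<in>?P. real g - 1) / real (card ?P)"
  proof (intro divide_right_mono sum_mono)
    fix \<sigma> assume sp: "\<sigma> \<in> ?P"
    hence sp': "\<sigma> permutes {1..K}" by (simp add: Perms_def)
    have "(\<Sum>j\<in>{2..K}. if \<sigma> \<in> ?E j then 1 else 0 :: real) = real (card {j\<in>{2..K}. \<sigma> \<in> ?E j})"
      by (simp add: sum.inter_filter[symmetric])
    also have "{j\<in>{2..K}. \<sigma> \<in> ?E j} = {j\<in>{1..K}. \<sigma> j div g = \<sigma> 1 div g} - {1}" by auto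
    also have "card \<dots> = card {j\<in>{1..K}. \<sigma> j div g = \<sigma> 1 div g} - 1"
      by (rule card_Diff_singleton) (use K2 in auto)
    also have "real (card {j\<in>{1..K}. \<sigma> j div g = \<sigma> 1 div g} - 1) \<le> real g - 1"
    proof -
      have "1 \<in> {j\<in>{1..K}. \<sigma> j div g = \<sigma> 1 div g}" using K2 by auto
      moreover have "finite {j\<in>{1..K}. \<sigma> j div g = \<sigma> 1 div g}" by simp
      ultimately have "card {j\<in>{1..K}. \<sigma> j div g = \<sigma> 1 div g} > 0" by (auto simp: card_gt_0_iff)
      hence "card {j\<in>{1..K}. \<sigma> j div g = \<sigma> 1 div g} \<ge> 1" by simp
      thus ?thesis using card_blk_le[OF sp' g, of "\<sigma> 1 div g"] by (simp add: of_nat_diff)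
    qed
    finally show "(\<Sum>j\<in>{2..K}. if \<sigma> \<in> ?E j then 1 else 0) \<le> real g - 1" .
  qed (use cP in auto)
  also have "\<dots> = real g - 1" using cP by simp
  finally show ?thesis .
qed

definition gN :: "nat \<Rightarrow> nat" where "gN N = nat \<lfloor>sqrt (real (N-1))\<rfloor> + 1"
definition mbN :: "nat \<Rightarrow> nat" where "mbN N = (N-1) div gN N + 1"

definition askd :: "nat \<Rightarrow> nat \<Rightarrow> (nat \<Rightarrow> nat) \<Rightarrow> bool \<Rightarrow> nat \<Rightarrow> bool" where
  "askd g \<theta> \<sigma> c j = ((j = \<theta> \<and> c) \<or> (j \<noteq> \<theta> \<and> \<sigma> j div g = \<sigma> \<theta> div g))"

definition Qv :: "nat \<Rightarrow> nat \<Rightarrow> (nat \<Rightarrow> nat) \<Rightarrow> bool \<Rightarrow> nat \<Rightarrow> (nat \<Rightarrow> nat)" where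
  "Qv N \<theta> \<sigma> c u = (\<lambda>j. if j \<in> {1..N-1} then to_nat (askd (gN N) \<theta> \<sigma> c j, if j = 1 then (\<theta> + u) mod (N-1) else 0)
       else if j = N then to_nat (map \<sigma> [1..<N], u) else 0)"

definition RestS :: "nat \<Rightarrow> ((nat \<Rightarrow> nat) \<times> bool \<times> nat) pmf" where
  "RestS N = pair_pmf (pmf_of_set (Perms (N-1))) (pair_pmf (bernoulli_pmf (beta (N-1) (gN N))) (pmf_of_set {..<N-1}))"

definition QvR :: "nat \<Rightarrow> nat \<Rightarrow> ((nat \<Rightarrow> nat) \<times> bool \<times> nat) \<Rightarrow> (nat \<Rightarrow> nat)" where
  "QvR N \<theta> r = Qv N \<theta> (fst r) (fst (snd r)) (snd (snd r))"

definition muS :: "nat \<Rightarrow> (nat \<times> (nat \<Rightarrow> nat)) pmf" where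
  "muS N = map_pmf (\<lambda>(\<theta>, r). (\<theta>, QvR N \<theta> r)) (pair_pmf (pmf_of_set {1..N-1}) (RestS N))"

definition xorB :: "nat \<Rightarrow> (nat \<Rightarrow> bool list) \<Rightarrow> nat set \<Rightarrow> bool list" where
  "xorB L W B = map (\<lambda>k. odd (card {j\<in>B. W j ! k})) [0..<L]"

definition cenA :: "nat \<Rightarrow> nat \<Rightarrow> (nat \<Rightarrow> bool list) \<Rightarrow> nat" where
  "cenA N q W = to_nat (map (\<lambda>b. xorB (N-1) W {j\<in>{1..N-1}. (fst (from_nat q :: nat list \<times> nat) ! (j - 1)) div gN N = b}) [0..<mbN N])"

definition ansS :: "nat \<Rightarrow> nat \<Rightarrow> nat \<Rightarrow> (nat \<Rightarrow> bool list) \<Rightarrow> nat" where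
  "ansS N i q W = (if i = N then cenA N q W else (if fst (from_nat q :: bool \<times> nat) then Suc (to_nat (W i)) else 0))"

definition dec_theta :: "nat \<Rightarrow> (nat \<Rightarrow> nat) \<Rightarrow> nat" where
  "dec_theta N Q = (let t = (snd (from_nat (Q 1) :: bool \<times> nat) + ((N-1) - snd (from_nat (Q N) :: nat list \<times> nat))) mod (N-1)
                    in if t = 0 then N-1 else t)"

definition dec_sl :: "nat \<Rightarrow> (nat \<Rightarrow> nat) \<Rightarrow> nat list" where
  "dec_sl N Q = fst (from_nat (Q N) :: nat list \<times> nat)"

definition decS :: "nat \<Rightarrow> (nat \<Rightarrow> nat) \<Rightarrow> (nat \<Rightarrow> nat) \<Rightarrow> bool list" where
  "decS N A Q = (let \<theta> = dec_theta N Q; sl = dec_sl N Q; b = (sl ! (\<theta> - 1)) div gN N;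
      C = (from_nat (A N) :: bool list list); B = {j\<in>{1..N-1}. (sl ! (j-1)) div gN N = b}
   in if A \<theta> \<noteq> 0 then (from_nat (A \<theta> - 1) :: bool list)
      else map (\<lambda>k. (C ! b) ! k \<noteq> odd (card {j\<in>B - {\<theta>}. (from_nat (A j - 1) :: bool list) ! k})) [0..<N-1])"

lemma gN_pos: "gN N \<ge> 1" by (simp add: gN_def)

lemma theta_recover:
  fixes K \<theta> u :: nat
  assumes K1: "K \<ge> 1" and th: "\<theta> \<in> {1..K}" and u: "u < K"
  shows "(let t = ((\<theta> + u) mod K + (K - u)) mod K in if t = 0 then K else t) = \<theta>"
proof -
  have "((\<theta> + u) mod K + (K - u)) mod K = (\<theta> + u + (K - u)) mod K" by (rule mod_add_left_eq)
  also have "\<theta> + u + (K - u) = \<theta> + K" using u by simp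
  also have "(\<theta> + K) mod K = \<theta> mod K" by simp
  finally have t: "((\<theta> + u) mod K + (K - u)) mod K = \<theta> mod K" .
  show ?thesis
  proof (cases "\<theta> = K")
    case True thus ?thesis using t by (simp add: Let_def)
  next
    case False
    hence "\<theta> < K" using th by auto
    hence "\<theta> mod K = \<theta>" by simp
    thus ?thesis using t th by (simp add: Let_def)
  qed
qed

lemma card_parity:
  assumes "finite B" "\<theta> \<in> B"
  shows "(odd (card {j\<in>B. P j}) \<noteq> odd (card {j\<in>B - {\<theta>}. P j})) = P \<theta>"
proof (cases "P \<theta>")
  case True
  have "{j\<in>B. P j} = insert \<theta> {j\<in>B - {\<theta>}. P j}" using assms True by auto
  hence "card {j\<in>B. P j} = Suc (card {j\<in>B - {\<theta>}. P j})" using assms by simp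
  thus ?thesis using True by simp
next
  case False
  have "{j\<in>B. P j} = {j\<in>B - {\<theta>}. P j}" using False by auto
  thus ?thesis using False by simp
qed

lemma upt_nth1: "j \<in> {1..K} \<Longrightarrow> map \<sigma> [1..<Suc K] ! (j - 1) = \<sigma> j"
  by (subst nth_map) (auto simp del: upt_Suc simp: nth_upt)

lemma reliable:
  assumes N3: "N \<ge> 3" and th: "\<theta> \<in> {1..N-1}" and sp: "\<sigma> \<in> Perms (N-1)" and u: "u < N - 1"
    and W: "W \<in> set_pmf (files_pmf (N-1) (N-1))"
  shows "decS N (\<lambda>i. if i \<in> {1..N} then ansS N i (Qv N \<theta> \<sigma> c u i) W else 0)
                 (\<lambda>i. if i \<in> {1..N} then Qv N \<theta> \<sigma> c u i else 0) = W \<theta>"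
proof -
  let ?K = "N - 1"
  let ?g = "gN N"
  define Q where "Q = (\<lambda>i. if i \<in> {1..N} then Qv N \<theta> \<sigma> c u i else 0)"
  define A where "A = (\<lambda>i. if i \<in> {1..N} then ansS N i (Qv N \<theta> \<sigma> c u i) W else 0)"
  have K2: "?K \<ge> 2" using N3 by simp
  have NK: "N = Suc ?K" using N3 by simp
  have sp': "\<sigma> permutes {1..?K}" using sp by (simp add: Perms_def)
  have NN: "N \<in> {1..N}" "N \<notin> {1..?K}" using N3 by auto
  have QN: "Q N = to_nat (map \<sigma> [1..<N], u)" using NN by (simp add: Q_def Qv_def)
  have Q1: "Q (Suc 0) = to_nat (askd ?g \<theta> \<sigma> c 1, (\<theta> + u) mod ?K)" using N3 by (simp add: Q_def Qv_def)
  have sl: "dec_sl N Q = map \<sigma> [1..<N]" by (simp add: dec_sl_def QN)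
  have slj: "dec_sl N Q ! (j - 1) = \<sigma> j" if "j \<in> {1..?K}" for j
    using upt_nth1[OF that, of \<sigma>] NK sl by simp
  have dth: "dec_theta N Q = \<theta>"
    using theta_recover[of ?K \<theta> u] K2 th u by (simp add: dec_theta_def QN Q1)
  have Aleaf: "A j = (if askd ?g \<theta> \<sigma> c j then Suc (to_nat (W j)) else 0)" if "j \<in> {1..?K}" for j
  proof -
    have "j \<noteq> N" "j \<in> {1..N}" using that N3 by auto
    thus ?thesis using that by (simp add: A_def ansS_def Qv_def)
  qed
  define b where "b = \<sigma> \<theta> div ?g"
  define B where "B = {j\<in>{1..?K}. \<sigma> j div ?g = b}"
  have slth: "dec_sl N Q ! (\<theta> - Suc 0) = \<sigma> \<theta>" using slj[OF th] by simp
  have Bdec: "{j\<in>{1..?K}. (dec_sl N Q ! (j-1)) div ?g = (dec_sl N Q ! (\<theta> - 1)) div ?g} = B"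
    using slj th unfolding B_def b_def by auto
  have thB: "\<theta> \<in> B" using th unfolding B_def b_def by simp
  have finB: "finite B" unfolding B_def by simp
  have lenW: "length (W \<theta>) = ?K" using files_memD(1)[OF W] th by simp
  show ?thesis
  proof (cases c)
    case True
    have "A \<theta> = Suc (to_nat (W \<theta>))" using Aleaf[OF th] True by (simp add: askd_def)
    thus ?thesis unfolding A_def[symmetric] Q_def[symmetric] decS_def by (simp add: Let_def dth)
  next
    case False
    have A0: "A \<theta> = 0" using Aleaf[OF th] False by (simp add: askd_def)
    have sth: "\<sigma> \<theta> \<in> {1..?K}" using permutes_in_image[OF sp'] th by simp
    have bm: "b < mbN N" unfolding b_def mbN_def using sth by (simp add: div_le_mono le_imp_less_Suc)
    have AN: "A N = cenA N (to_nat (map \<sigma> [1..<N], u)) W" using NN by (simp add: A_def ansS_def Qv_def)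
    have C: "(from_nat (A N) :: bool list list) ! b = xorB ?K W B"
    proof -
      have "(from_nat (A N) :: bool list list) = map (\<lambda>b. xorB ?K W {j\<in>{1..?K}. (map \<sigma> [1..<N] ! (j - 1)) div ?g = b}) [0..<mbN N]"
        by (simp add: AN cenA_def)
      hence "(from_nat (A N) :: bool list list) ! b = xorB ?K W {j\<in>{1..?K}. (map \<sigma> [1..<N] ! (j - 1)) div ?g = b}"
        using bm by simp
      also have "{j\<in>{1..?K}. (map \<sigma> [1..<N] ! (j - 1)) div ?g = b} = B"
        unfolding B_def using slj sl by auto
      finally show ?thesis .
    qed
    have Aj: "(from_nat (A j - 1) :: bool list) = W j" if "j \<in> B - {\<theta>}" for j
    proof -
      have j: "j \<in> {1..?K}" "j \<noteq> \<theta>" "\<sigma> j div ?g = b" using that unfolding B_def by auto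
      hence "askd ?g \<theta> \<sigma> c j" unfolding askd_def b_def by simp
      thus ?thesis using Aleaf[OF j(1)] by simp
    qed
    have "decS N A Q = map (\<lambda>k. (xorB ?K W B) ! k \<noteq> odd (card {j\<in>B - {\<theta>}. (from_nat (A j - 1) :: bool list) ! k})) [0..<?K]"
      unfolding decS_def Let_def using A0 C Bdec by (simp add: dth b_def slth)
    also have "\<dots> = map (\<lambda>k. odd (card {j\<in>B. W j ! k}) \<noteq> odd (card {j\<in>B - {\<theta>}. W j ! k})) [0..<?K]"
    proof (rule map_cong[OF refl])
      fix k assume "k \<in> set [0..<?K]"
      hence "k < ?K" by simp
      moreover have "{j\<in>B - {\<theta>}. (from_nat (A j - 1) :: bool list) ! k} = {j\<in>B - {\<theta>}. W j ! k}"
        using Aj by auto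
      ultimately show "(xorB ?K W B) ! k \<noteq> odd (card {j\<in>B - {\<theta>}. (from_nat (A j - 1) :: bool list) ! k})
          = (odd (card {j\<in>B. W j ! k}) \<noteq> odd (card {j\<in>B - {\<theta>}. W j ! k}))"
        by (simp add: xorB_def)
    qed
    also have "\<dots> = map (\<lambda>k. W \<theta> ! k) [0..<?K]"
      using card_parity[OF finB thB] by simp
    also have "\<dots> = W \<theta>" using lenW by (metis map_nth)
    finally show ?thesis unfolding A_def Q_def .
  qed
qed

lemma cond_ent_indep:
  assumes finmu: "finite (set_pmf \<mu>)" and K1: "K \<ge> 1"
    and J: "map_pmf (\<lambda>x. (fst x, snd x j)) \<mu> = pair_pmf (pmf_of_set {1..K}) \<nu>"
  shows "cond_ent (pir_joint \<mu> K L) (\<lambda>(\<theta>, Q, W). \<theta>) (\<lambda>(\<theta>, Q, W). (Q j, h W)) = log 2 (real K)"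
proof -
  let ?F = "files_pmf K L"
  let ?U = "pmf_of_set {1..K::nat}"
  define R where "R = bind_pmf \<nu> (\<lambda>b. map_pmf (\<lambda>W. (b, h W)) ?F)"
  have finnu: "finite (set_pmf \<nu>)"
  proof -
    have "set_pmf \<nu> = snd ` set_pmf (pair_pmf ?U \<nu>)" using K1 by (auto simp: set_pair_pmf)
    also have "\<dots> = snd ` set_pmf (map_pmf (\<lambda>x. (fst x, snd x j)) \<mu>)" using J by simp
    finally show ?thesis using finmu by simp
  qed
  have finR: "finite (set_pmf R)" unfolding R_def using finnu finite_files by (auto simp: set_bind_pmf)
  have finU: "finite (set_pmf ?U)" using K1 by (subst set_pmf_of_set) auto
  have T: "map_pmf (\<lambda>w. ((\<lambda>(\<theta>, Q, W). \<theta>) w, (\<lambda>(\<theta>, Q, W). (Q j, h W)) w)) (pir_joint \<mu> K L) = pair_pmf ?U R"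
  proof -
    have "map_pmf (\<lambda>w. ((\<lambda>(\<theta>, Q, W). \<theta>) w, (\<lambda>(\<theta>, Q, W). (Q j, h W)) w)) (pir_joint \<mu> K L)
        = bind_pmf \<mu> (\<lambda>x. map_pmf (\<lambda>W. (fst x, (snd x j, h W))) ?F)"
      by (simp add: map_pir_joint)
    also have "\<dots> = bind_pmf (map_pmf (\<lambda>x. (fst x, snd x j)) \<mu>) (\<lambda>y. map_pmf (\<lambda>W. (fst y, (snd y, h W))) ?F)"
      by (simp add: bind_map_pmf)
    also have "\<dots> = bind_pmf (pair_pmf ?U \<nu>) (\<lambda>y. map_pmf (\<lambda>W. (fst y, (snd y, h W))) ?F)"
      by (simp only: J)
    also have "\<dots> = bind_pmf ?U (\<lambda>a. bind_pmf \<nu> (\<lambda>b. map_pmf (\<lambda>W. (a, (b, h W))) ?F))"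
      by (simp add: pair_as_bind bind_assoc_pmf bind_map_pmf)
    also have "\<dots> = bind_pmf ?U (\<lambda>a. map_pmf (Pair a) R)"
      unfolding R_def by (simp add: map_bind_pmf pmf.map_comp o_def)
    also have "\<dots> = pair_pmf ?U R" by (simp add: pair_as_bind)
    finally show ?thesis .
  qed
  have Y: "map_pmf (\<lambda>(\<theta>, Q, W). (Q j, h W)) (pir_joint \<mu> K L) = R"
  proof -
    have "map_pmf (\<lambda>(\<theta>, Q, W). (Q j, h W)) (pir_joint \<mu> K L)
        = map_pmf snd (map_pmf (\<lambda>w. ((\<lambda>(\<theta>, Q, W). \<theta>) w, (\<lambda>(\<theta>, Q, W). (Q j, h W)) w)) (pir_joint \<mu> K L))"
      by (simp add: pmf.map_comp o_def)
    also have "\<dots> = R" unfolding T by (simp add: map_snd_pair_pmf)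
    finally show ?thesis .
  qed
  show ?thesis unfolding cond_ent_def T Y
    using ent_pair[OF finU finR] ent_pmf_of_set[of "{1..K}"] K1 by simp
qed

lemma set_bern_finite: "finite (set_pmf (bernoulli_pmf p))"
  by (rule finite_subset[of _ UNIV]) auto

lemma RestS_finite: "N \<ge> 2 \<Longrightarrow> finite (set_pmf (RestS N))"
  unfolding RestS_def set_pair_pmf
  using Perms_finite Perms_ne set_bern_finite
  by (intro finite_cartesian_product) (auto simp: set_pmf_of_set lessThan_empty_iff)

lemma muS_finite: "N \<ge> 2 \<Longrightarrow> finite (set_pmf (muS N))"
  unfolding muS_def using RestS_finite by (auto simp: set_pair_pmf set_pmf_of_set)

lemma muS_fst: "map_pmf fst (muS N) = pmf_of_set {1..N-1}"
  unfolding muS_def by (simp add: pmf.map_comp o_def case_prod_beta map_fst_pair_pmf)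

lemma muS_J: "map_pmf (\<lambda>x. (fst x, snd x j)) (muS N) = map_pmf (\<lambda>(\<theta>, r). (\<theta>, QvR N \<theta> r j)) (pair_pmf (pmf_of_set {1..N-1}) (RestS N))"
  unfolding muS_def pmf.map_comp o_def by (intro map_pmf_cong refl) auto

lemma mod_add_small:
  fixes a x K :: nat assumes "a < K" "x < K"
  shows "(a + x) mod K = (if a + x < K then a + x else a + x - K)"
proof (cases "a + x < K")
  case True thus ?thesis by simp
next
  case False
  hence "(a + x) mod K = (a + x - K) mod K" by (simp add: le_mod_geq)
  also have "\<dots> = a + x - K" using assms False by simp
  finally show ?thesis using False by simp
qed

lemma shift_uniform:
  fixes K \<theta> :: nat
  assumes K1: "K \<ge> 1"
  shows "map_pmf (\<lambda>u. (\<theta> + u) mod K) (pmf_of_set {..<K}) = pmf_of_set {..<K}"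
proof (rule map_pmf_of_set_bij_betw)
  have "0 \<in> {..<K}" using K1 by simp
  thus "{..<K} \<noteq> {}" by blast
  show "finite {..<K}" by simp
  show "bij_betw (\<lambda>u. (\<theta> + u) mod K) {..<K} {..<K}"
  proof (rule bij_betw_imageI)
    show "inj_on (\<lambda>u. (\<theta> + u) mod K) {..<K}"
    proof (rule inj_onI)
      fix x y assume x: "x \<in> {..<K}" and y: "y \<in> {..<K}" and e: "(\<theta> + x) mod K = (\<theta> + y) mod K"
      have Kp: "0 < K" using x by simp
      have a: "\<theta> mod K < K" using Kp by simp
      have "(\<theta> mod K + x) mod K = (\<theta> mod K + y) mod K" using e by (simp add: mod_add_left_eq)
      thus "x = y" using mod_add_small[OF a, of x] mod_add_small[OF a, of y] x y by (auto split: if_splits)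
    qed
    hence "card ((\<lambda>u. (\<theta> + u) mod K) ` {..<K}) = K" by (simp add: card_image)
    moreover have "(\<lambda>u. (\<theta> + u) mod K) ` {..<K} \<subseteq> {..<K}" using K1 by auto
    ultimately show "(\<lambda>u. (\<theta> + u) mod K) ` {..<K} = {..<K}"
      by (metis card_lessThan card_subset_eq finite_lessThan)
  qed
qed

lemma leaf_law:
  assumes N3: "N \<ge> 3" and th: "\<theta> \<in> {1..N-1}" and j: "j \<in> {1..N-1}"
  shows "map_pmf (\<lambda>r. (askd (gN N) \<theta> (fst r) (fst (snd r)) j, (\<theta> + snd (snd r)) mod (N-1))) (RestS N)
       = pair_pmf (bernoulli_pmf (beta (N-1) (gN N))) (pmf_of_set {..<N-1})"
proof -
  let ?K = "N - 1"
  let ?S = "pmf_of_set (Perms ?K)" and ?C = "bernoulli_pmf (beta ?K (gN N))" and ?U = "pmf_of_set {..<?K}"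
  have K1: "?K \<ge> 1" using N3 by simp
  have sh: "map_pmf (\<lambda>u. (\<theta> + u) mod ?K) ?U = ?U" by (rule shift_uniform[OF K1])
  show ?thesis
  proof (cases "j = \<theta>")
    case True
    have "map_pmf (\<lambda>r. (askd (gN N) \<theta> (fst r) (fst (snd r)) j, (\<theta> + snd (snd r)) mod ?K)) (RestS N)
        = map_pmf (\<lambda>(c, u). (c, (\<theta> + u) mod ?K)) (map_pmf snd (RestS N))"
      unfolding pmf.map_comp o_def using True by (intro map_pmf_cong refl) (auto simp: askd_def)
    also have "map_pmf snd (RestS N) = pair_pmf ?C ?U" unfolding RestS_def by (rule map_snd_pair_pmf)
    also have "map_pmf (\<lambda>(c, u). (c, (\<theta> + u) mod ?K)) (pair_pmf ?C ?U) = pair_pmf (map_pmf (\<lambda>c. c) ?C) (map_pmf (\<lambda>u. (\<theta> + u) mod ?K) ?U)"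
      by (rule map_pair)
    finally show ?thesis using sh by (simp add: map_pmf_ident)
  next
    case False
    have "map_pmf (\<lambda>r. (askd (gN N) \<theta> (fst r) (fst (snd r)) j, (\<theta> + snd (snd r)) mod ?K)) (RestS N)
        = map_pmf (\<lambda>(\<sigma>, cu). (\<sigma> j div gN N = \<sigma> \<theta> div gN N, (\<lambda>(c, u). (\<theta> + u) mod ?K) cu)) (pair_pmf ?S (pair_pmf ?C ?U))"
      using False unfolding RestS_def by (intro map_pmf_cong refl) (auto simp: askd_def)
    also have "\<dots> = pair_pmf (map_pmf (\<lambda>\<sigma>. \<sigma> j div gN N = \<sigma> \<theta> div gN N) ?S) (map_pmf (\<lambda>(c, u). (\<theta> + u) mod ?K) (pair_pmf ?C ?U))"
      by (rule map_pair)
    also have "map_pmf (\<lambda>\<sigma>. \<sigma> j div gN N = \<sigma> \<theta> div gN N) ?S = ?C"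
      by (rule same_blk_law) (use N3 th j False in auto)
    also have "map_pmf (\<lambda>(c, u). (\<theta> + u) mod ?K) (pair_pmf ?C ?U) = map_pmf (\<lambda>u. (\<theta> + u) mod ?K) (map_pmf snd (pair_pmf ?C ?U))"
      unfolding pmf.map_comp o_def by (intro map_pmf_cong refl) auto
    also have "\<dots> = ?U" by (simp only: map_snd_pair_pmf sh)
    finally show ?thesis .
  qed
qed

definition nuLeaf :: "nat \<Rightarrow> nat \<Rightarrow> nat pmf" where
  "nuLeaf N j = map_pmf (\<lambda>(b, v). to_nat (b, if j = 1 then v else 0)) (pair_pmf (bernoulli_pmf (beta (N-1) (gN N))) (pmf_of_set {..<N-1}))"

lemma muS_J_leaf:
  assumes N3: "N \<ge> 3" and j: "j \<in> {1..N-1}"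
  shows "map_pmf (\<lambda>x. (fst x, snd x j)) (muS N) = pair_pmf (pmf_of_set {1..N-1}) (nuLeaf N j)"
  unfolding muS_J
proof (rule indep_pair)
  fix \<theta> assume "\<theta> \<in> set_pmf (pmf_of_set {1..N-1})"
  hence th: "\<theta> \<in> {1..N-1}" using N3 by (subst (asm) set_pmf_of_set) auto
  have "map_pmf (\<lambda>r. QvR N \<theta> r j) (RestS N)
      = map_pmf (\<lambda>(b, v). to_nat (b, if j = 1 then v else 0))
          (map_pmf (\<lambda>r. (askd (gN N) \<theta> (fst r) (fst (snd r)) j, (\<theta> + snd (snd r)) mod (N-1))) (RestS N))"
  proof -
    have "(\<lambda>r. QvR N \<theta> r j) = (\<lambda>r. (\<lambda>(b, v). to_nat (b, if j = 1 then v else 0))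
           ((\<lambda>r. (askd (gN N) \<theta> (fst r) (fst (snd r)) j, (\<theta> + snd (snd r)) mod (N-1))) r))"
      using j by (auto simp: QvR_def Qv_def fun_eq_iff)
    thus ?thesis by (simp only: pmf.map_comp o_def)
  qed
  also have "\<dots> = nuLeaf N j" unfolding nuLeaf_def leaf_law[OF N3 th j] ..
  finally show "map_pmf (\<lambda>r. QvR N \<theta> r j) (RestS N) = nuLeaf N j" .
qed

lemma muS_J_cen:
  assumes N3: "N \<ge> 3"
  shows "map_pmf (\<lambda>x. (fst x, snd x N)) (muS N) = pair_pmf (pmf_of_set {1..N-1}) (map_pmf (\<lambda>r. to_nat (map (fst r) [1..<N], snd (snd r))) (RestS N))"
  unfolding muS_J
proof (rule indep_pair)
  fix \<theta>
  have NK: "N \<notin> {1..N-1}" using N3 by auto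
  show "map_pmf (\<lambda>r. QvR N \<theta> r N) (RestS N) = map_pmf (\<lambda>r. to_nat (map (fst r) [1..<N], snd (snd r))) (RestS N)"
    by (intro map_pmf_cong refl) (use NK in \<open>auto simp: QvR_def Qv_def\<close>)
qed

lemma set_RestS:
  assumes "N \<ge> 2" "r \<in> set_pmf (RestS N)"
  shows "fst r \<in> Perms (N-1)" "snd (snd r) < N - 1"
  using assms Perms_finite Perms_ne unfolding RestS_def
  by (auto simp: set_pair_pmf set_pmf_of_set lessThan_empty_iff)

lemma set_muS:
  assumes "N \<ge> 2" "x \<in> set_pmf (muS N)"
  shows "\<exists>\<theta> r. x = (\<theta>, QvR N \<theta> r) \<and> \<theta> \<in> {1..N-1} \<and> r \<in> set_pmf (RestS N)"
proof -
  from assms(2) obtain y where y: "y \<in> set_pmf (pair_pmf (pmf_of_set {1..N-1}) (RestS N))"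
      and xy: "x = (\<lambda>(\<theta>, r). (\<theta>, QvR N \<theta> r)) y"
    unfolding muS_def by auto
  obtain \<theta> r where yy: "y = (\<theta>, r)" by (cases y)
  have "\<theta> \<in> {1..N-1}" "r \<in> set_pmf (RestS N)" using y yy assms(1) by (auto simp: set_pair_pmf set_pmf_of_set)
  moreover have "x = (\<theta>, QvR N \<theta> r)" using xy yy by simp
  ultimately show ?thesis by blast
qed

lemma xorB_local:
  assumes "B \<subseteq> S" "\<forall>j\<in>S. W j = W' j"
  shows "xorB L W B = xorB L W' B"
proof -
  have "{j\<in>B. W j ! k} = {j\<in>B. W' j ! k}" for k using assms by auto
  thus ?thesis unfolding xorB_def by simp
qed

lemma ansS_local:
  assumes N2: "N \<ge> 2" and i: "i \<in> {1..N}" and WW: "\<forall>j\<in>star_store N i. W j = W' j"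
  shows "ansS N i q W = ansS N i q W'"
proof (cases "i = N")
  case True
  hence WW': "\<forall>j\<in>{1..N-1}. W j = W' j" using WW by (simp add: star_store_def)
  have "cenA N q W = cenA N q W'" unfolding cenA_def
    by (intro arg_cong[where f = to_nat] map_cong refl xorB_local[OF _ WW']) auto
  thus ?thesis using True by (simp add: ansS_def)
next
  case False
  hence "W i = W' i" using WW by (simp add: star_store_def)
  thus ?thesis using False by (simp add: ansS_def)
qed

theorem scheme_ok:
  assumes N3: "N \<ge> 3"
  shows "is_star_pir_scheme N (N-1) (muS N) (ansS N)"
proof -
  have N2: "N \<ge> 2" using N3 by simp
  have K1: "N - 1 \<ge> 1" using N3 by simp
  have finmu: "finite (set_pmf (muS N))" by (rule muS_finite[OF N2])
  have loc: "\<forall>i\<in>{1..N}. \<forall>q W W'. (\<forall>j\<in>star_store N i. W j = W' j) \<longrightarrow> ansS N i q W = ansS N i q W'"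
    using ansS_local[OF N2] by blast
  have dec: "\<forall>(\<theta>, Q, W)\<in>set_pmf (pir_joint (muS N) (N-1) (N-1)).
            decS N (\<lambda>i. if i \<in> {1..N} then ansS N i (Q i) W else 0)
                (\<lambda>i. if i \<in> {1..N} then Q i else 0) = W \<theta>"
  proof (intro ballI, clarify)
    fix \<theta> Q W assume m: "(\<theta>, Q, W) \<in> set_pmf (pir_joint (muS N) (N-1) (N-1))"
    hence x: "(\<theta>, Q) \<in> set_pmf (muS N)" and W: "W \<in> set_pmf (files_pmf (N-1) (N-1))"
      by (auto simp: set_pir_joint)
    obtain \<theta>' r where e: "(\<theta>, Q) = (\<theta>', QvR N \<theta>' r)" and th: "\<theta>' \<in> {1..N-1}" and r: "r \<in> set_pmf (RestS N)"
      using set_muS[OF N2 x] by blast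
    have eq: "\<theta> = \<theta>'" "Q = Qv N \<theta> (fst r) (fst (snd r)) (snd (snd r))" using e by (auto simp: QvR_def)
    show "decS N (\<lambda>i. if i \<in> {1..N} then ansS N i (Q i) W else 0) (\<lambda>i. if i \<in> {1..N} then Q i else 0) = W \<theta>"
      unfolding eq(2) by (rule reliable[OF N3 _ set_RestS(1)[OF N2 r] set_RestS(2)[OF N2 r] W]) (use th eq(1) in simp)
  qed
  have priv: "\<forall>i\<in>{1..N}. cond_ent (pir_joint (muS N) (N-1) (N-1)) (\<lambda>(\<theta>, Q, W). \<theta>)
            (\<lambda>(\<theta>, Q, W). (Q i, \<lambda>j. if j \<in> star_store N i then W j else [])) = log 2 (real (N-1))"
  proof
    fix i assume i: "i \<in> {1..N}"
    show "cond_ent (pir_joint (muS N) (N-1) (N-1)) (\<lambda>(\<theta>, Q, W). \<theta>)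
            (\<lambda>(\<theta>, Q, W). (Q i, \<lambda>j. if j \<in> star_store N i then W j else [])) = log 2 (real (N-1))"
    proof (cases "i = N")
      case True
      show ?thesis unfolding True by (rule cond_ent_indep[OF finmu K1 muS_J_cen[OF N3]])
    next
      case False
      hence iK: "i \<in> {1..N-1}" using i by auto
      show ?thesis by (rule cond_ent_indep[OF finmu K1 muS_J_leaf[OF N3 iK]])
    qed
  qed
  show ?thesis unfolding scheme_unfold
    using finmu muS_fst loc dec priv by blast
qed

lemma nuLeaf_bit: "map_pmf (\<lambda>v. fst (from_nat v :: bool \<times> nat)) (nuLeaf N k) = bernoulli_pmf (beta (N-1) (gN N))"
  unfolding nuLeaf_def pmf.map_comp o_def
  by (simp add: case_prod_beta map_fst_pair_pmf[unfolded fst_def] cong: map_pmf_cong)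
     (metis map_fst_pair_pmf fst_def)

lemma asked_law:
  assumes N3: "N \<ge> 3" and k: "k \<in> {1..N-1}"
  shows "map_pmf (\<lambda>x. fst (from_nat (snd x k) :: bool \<times> nat)) (muS N) = bernoulli_pmf (beta (N-1) (gN N))"
proof -
  have "map_pmf (\<lambda>x. fst (from_nat (snd x k) :: bool \<times> nat)) (muS N)
      = map_pmf (\<lambda>y. fst (from_nat (snd y) :: bool \<times> nat)) (map_pmf (\<lambda>x. (fst x, snd x k)) (muS N))"
    by (simp add: pmf.map_comp o_def)
  also have "\<dots> = map_pmf (\<lambda>v. fst (from_nat v :: bool \<times> nat)) (map_pmf snd (pair_pmf (pmf_of_set {1..N-1}) (nuLeaf N k)))"
    unfolding muS_J_leaf[OF N3 k] by (simp add: pmf.map_comp o_def)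
  also have "\<dots> = bernoulli_pmf (beta (N-1) (gN N))" by (simp only: map_snd_pair_pmf nuLeaf_bit)
  finally show ?thesis .
qed

lemma leaf_ent_bound:
  assumes N3: "N \<ge> 3" and k: "k \<in> {1..N-1}"
  shows "ent (map_pmf (\<lambda>(\<theta>, Q, W). ansS N k (Q k) W) (pir_joint (muS N) (N-1) (N-1)))
          \<le> 1 + real (N-1) * beta (N-1) (gN N)"
proof -
  let ?L = "N - 1"
  let ?P = "pir_joint (muS N) (N-1) (N-1)"
  let ?p = "map_pmf (\<lambda>(\<theta>, Q, W). ansS N k (Q k) W) ?P"
  let ?S = "{xs::bool list. length xs = ?L}"
  define Y where "Y = Suc ` to_nat ` ?S"
  define q where "q = (\<lambda>x::nat. if x = 0 then 1/2 else 1 / 2 ^ (?L + 1) :: real)"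
  have N2: "N \<ge> 2" using N3 by simp
  have kN: "k \<noteq> N" using k by auto
  have finP: "finite (set_pmf ?P)" by (rule finite_pir_joint[OF muS_finite[OF N2]])
  have finp: "finite (set_pmf ?p)" using finP by simp
  have finY: "finite Y" unfolding Y_def using strings_finite by simp
  have cY: "card Y \<le> 2 ^ ?L"
  proof -
    have "card Y \<le> card (to_nat ` ?S)" unfolding Y_def by (rule card_image_le) (simp add: strings_finite)
    also have "\<dots> \<le> card ?S" by (rule card_image_le[OF strings_finite])
    finally show ?thesis by (simp add: strings_card)
  qed
  have setp: "set_pmf ?p \<subseteq> insert 0 Y"
  proof
    fix x assume "x \<in> set_pmf ?p"
    then obtain \<theta> Q W where m: "(\<theta>, Q, W) \<in> set_pmf ?P" and x: "x = ansS N k (Q k) W" by auto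
    have W: "W \<in> set_pmf (files_pmf (N-1) (N-1))" using m by (simp add: set_pir_joint)
    have "length (W k) = ?L" using files_memD(1)[OF W k] .
    thus "x \<in> insert 0 Y" using x kN unfolding Y_def ansS_def by auto
  qed
  have Y0: "0 \<notin> Y" unfolding Y_def by auto
  have sq: "(\<Sum>x\<in>set_pmf ?p. q x) \<le> 1"
  proof -
    have s1: "(\<Sum>x\<in>set_pmf ?p. q x) \<le> (\<Sum>x\<in>insert 0 Y. q x)"
      by (rule sum_mono2) (use finY setp in \<open>auto simp: q_def\<close>)
    have s2: "(\<Sum>x\<in>insert 0 Y. q x) = q 0 + (\<Sum>x\<in>Y. q x)" using finY Y0 by simp
    have s3: "(\<Sum>x\<in>Y. q x) = (\<Sum>x\<in>Y. 1 / 2 ^ (?L + 1))"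
    proof (rule sum.cong[OF refl])
      fix x assume xY: "x \<in> Y"
      have "x \<noteq> 0"
      proof
        assume "x = 0" thus False using xY Y0 by simp
      qed
      thus "q x = 1 / 2 ^ (?L + 1)" by (simp add: q_def)
    qed
    have s4: "(\<Sum>x\<in>Y. 1 / 2 ^ (?L + 1) :: real) = real (card Y) / 2 ^ (?L + 1)" by simp
    have s5: "q 0 = 1/2" by (simp add: q_def)
    have s6: "real (card Y) / 2 ^ (?L + 1) \<le> 2 ^ ?L / 2 ^ (?L + 1)"
      using cY by (intro divide_right_mono) (auto simp del: power_Suc simp: of_nat_le_iff[symmetric])
    have s7: "(2::real) ^ ?L / 2 ^ (?L + 1) = 1/2" by simp
    show ?thesis using s1 s2 s3 s4 s5 s6 s7 by linarith
  qed
  have "ent ?p \<le> (\<Sum>x\<in>set_pmf ?p. pmf ?p x * (- log 2 (q x)))"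
    by (rule ent_bound_q[OF finp _ sq]) (simp add: q_def)
  also have "\<dots> = (\<Sum>x\<in>set_pmf ?p. pmf ?p x + real ?L * (if x \<noteq> 0 then pmf ?p x else 0))"
  proof (rule sum.cong[OF refl])
    fix x
    have l1: "- log 2 (1 / 2 ^ (?L + 1) :: real) = real ?L + 1"
    proof -
      have a: "(1 / 2 ^ (?L + 1) :: real) = inverse (2 ^ (?L + 1))" by (simp only: inverse_eq_divide)
      have b: "log 2 ((2::real) ^ (?L + 1)) = real (?L + 1)" by (rule log_pow_cancel) auto
      show ?thesis by (simp only: a log_inverse b minus_minus of_nat_add of_nat_1)
    qed
    show "pmf ?p x * (- log 2 (q x)) = pmf ?p x + real ?L * (if x \<noteq> 0 then pmf ?p x else 0)"
    proof (cases "x = 0")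
      case True
      have "- log 2 (q x) = 1" using True by (simp add: q_def log_divide)
      thus ?thesis using True by simp
    next
      case False
      have "q x = 1 / 2 ^ (?L + 1)" using False by (simp add: q_def)
      hence "- log 2 (q x) = real ?L + 1" using l1 by (simp only:)
      thus ?thesis using False by (simp add: algebra_simps)
    qed
  qed
  also have "\<dots> = 1 + real ?L * (\<Sum>x\<in>set_pmf ?p. if x \<noteq> 0 then pmf ?p x else 0)"
    using finp by (simp add: sum.distrib sum_pmf_eq_1 sum_distrib_left)
  also have "(\<Sum>x\<in>set_pmf ?p. if x \<noteq> 0 then pmf ?p x else 0) = pmf (map_pmf (\<lambda>x. x \<noteq> 0) ?p) True"
  proof -
    have "pmf (map_pmf (\<lambda>x. x \<noteq> 0) ?p) True = (\<Sum>x\<in>{x\<in>set_pmf ?p. (x \<noteq> 0) = True}. pmf ?p x)"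
      by (rule pmf_map_fiber[OF finp])
    also have "{x\<in>set_pmf ?p. (x \<noteq> 0) = True} = {x\<in>set_pmf ?p. x \<noteq> 0}" by (simp only: eq_True)
    also have "(\<Sum>x\<in>{x\<in>set_pmf ?p. x \<noteq> 0}. pmf ?p x) = (\<Sum>x\<in>set_pmf ?p. if x \<noteq> 0 then pmf ?p x else 0)"
      by (rule sum.inter_filter[OF finp])
    finally show ?thesis by (rule sym)
  qed
  also have "map_pmf (\<lambda>x. x \<noteq> 0) ?p = map_pmf (\<lambda>x. fst (from_nat (snd x k) :: bool \<times> nat)) (muS N)"
  proof -
    have "map_pmf (\<lambda>x. x \<noteq> 0) ?p = map_pmf (\<lambda>w. fst (from_nat (fst (snd w) k) :: bool \<times> nat)) ?P"
      unfolding pmf.map_comp o_def using kN by (intro map_pmf_cong refl) (auto simp: ansS_def split: if_splits)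
    also have "\<dots> = map_pmf (\<lambda>x. fst (from_nat (snd x k) :: bool \<times> nat)) (muS N)"
      using map_pir_noW[of "\<lambda>a b. fst (from_nat (b k) :: bool \<times> nat)" "muS N" "N-1" "N-1"] by simp
    finally show ?thesis .
  qed
  also have "\<dots> = bernoulli_pmf (beta (N-1) (gN N))" by (rule asked_law[OF N3 k])
  also have "pmf (bernoulli_pmf (beta (N-1) (gN N))) True = beta (N-1) (gN N)" using beta_01 by simp
  finally show ?thesis by simp
qed

lemma cen_ent_bound:
  assumes N3: "N \<ge> 3"
  shows "ent (map_pmf (\<lambda>(\<theta>, Q, W). ansS N N (Q N) W) (pir_joint (muS N) (N-1) (N-1)))
          \<le> real (N-1) * real (mbN N)"
proof -
  let ?L = "N - 1"
  let ?P = "pir_joint (muS N) (N-1) (N-1)"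
  let ?p = "map_pmf (\<lambda>(\<theta>, Q, W). ansS N N (Q N) W) ?P"
  let ?S = "{xs::bool list. length xs = ?L}"
  define LL where "LL = {xs::bool list list. set xs \<subseteq> ?S \<and> length xs = mbN N}"
  have finLL: "finite LL" unfolding LL_def using strings_finite by (rule finite_lists_length_eq)
  have cLL: "card LL = (2 ^ ?L) ^ mbN N" unfolding LL_def using strings_finite
    by (simp add: card_lists_length_eq strings_card)
  have setp: "set_pmf ?p \<subseteq> to_nat ` LL"
  proof
    fix x assume "x \<in> set_pmf ?p"
    then obtain \<theta> Q W where x: "x = ansS N N (Q N) W" by auto
    have "(map (\<lambda>b. xorB (N-1) W {j\<in>{1..N-1}. (fst (from_nat (Q N) :: nat list \<times> nat) ! (j - 1)) div gN N = b}) [0..<mbN N]) \<in> LL"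
      unfolding LL_def by (auto simp: xorB_def)
    hence "to_nat (map (\<lambda>b. xorB (N-1) W {j\<in>{1..N-1}. (fst (from_nat (Q N) :: nat list \<times> nat) ! (j - 1)) div gN N = b}) [0..<mbN N]) \<in> to_nat ` LL"
      by (rule imageI)
    thus "x \<in> to_nat ` LL" unfolding x ansS_def cenA_def by simp
  qed
  have fin: "finite (to_nat ` LL)" using finLL by simp
  have ne: "to_nat ` LL \<noteq> {}" using setp set_pmf_not_empty[of ?p] by blast
  have "ent ?p \<le> log 2 (card (to_nat ` LL))" by (rule ent_le_card[OF fin setp])
  also have "\<dots> \<le> log 2 (card LL)"
  proof -
    have "card (to_nat ` LL) \<le> card LL" by (rule card_image_le[OF finLL])
    moreover have "card (to_nat ` LL) > 0" using fin ne by (simp add: card_gt_0_iff)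
    ultimately show ?thesis by simp
  qed
  also have "\<dots> = real ?L * real (mbN N)"
  proof -
    have "real (card LL) = (2::real) ^ (?L * mbN N)" unfolding cLL by (simp add: power_mult)
    thus ?thesis by (simp add: log_pow_cancel)
  qed
  finally show ?thesis .
qed

lemma Tden_upper:
  assumes N3: "N \<ge> 3"
  shows "Tden N (N-1) (muS N) (ansS N) \<le> real (N-1) * (1 + real (N-1) * beta (N-1) (gN N)) + real (N-1) * real (mbN N)"
proof -
  have "{1..N} = insert N {1..N-1}" using N3 by auto
  hence "Tden N (N-1) (muS N) (ansS N)
      = ent (map_pmf (\<lambda>(\<theta>, Q, W). ansS N N (Q N) W) (pir_joint (muS N) (N-1) (N-1)))
        + (\<Sum>i=1..N-1. ent (map_pmf (\<lambda>(\<theta>, Q, W). ansS N i (Q i) W) (pir_joint (muS N) (N-1) (N-1))))"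
    unfolding Tden_def using N3 by simp
  also have "\<dots> \<le> real (N-1) * real (mbN N) + (\<Sum>i=1..N-1. 1 + real (N-1) * beta (N-1) (gN N))"
    by (intro add_mono cen_ent_bound[OF N3] sum_mono leaf_ent_bound[OF N3]) auto
  also have "\<dots> = real (N-1) * (1 + real (N-1) * beta (N-1) (gN N)) + real (N-1) * real (mbN N)" by simp
  finally show ?thesis .
qed

lemma rate_lower:
  assumes N3: "N \<ge> 3"
  shows "pir_rate N (N-1) (muS N) (ansS N) \<ge> 1 / (5 * sqrt N)"
proof -
  define K where "K = N - 1"
  define g where "g = gN N"
  define m where "m = mbN N"
  define \<beta> where "\<beta> = beta (N-1) (gN N)"
  define T where "T = Tden N (N-1) (muS N) (ansS N)"
  have K2: "K \<ge> 2" unfolding K_def using N3 by simp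
  have sch: "is_star_pir_scheme N (N-1) (muS N) (ansS N)" by (rule scheme_ok[OF N3])
  have Tpos: "T > 0" unfolding T_def by (rule Tden_pos[OF sch]) (use N3 in auto)
  have Tup: "T \<le> real K * (1 + real K * \<beta>) + real K * real m"
    unfolding T_def K_def \<beta>_def m_def by (rule Tden_upper[OF N3])
  have b0: "\<beta> \<ge> 0" unfolding \<beta>_def by (rule beta_01)
  have bb: "real (K - 1) * \<beta> \<le> real g - 1" unfolding \<beta>_def g_def K_def
    by (rule beta_bound) (use N3 gN_pos in auto)
  have Kb: "real K * \<beta> \<le> 2 * (real g - 1)"
  proof -
    have "real K \<le> 2 * real (K - 1)" using K2 by simp
    hence "real K * \<beta> \<le> 2 * real (K - 1) * \<beta>" using b0 by (intro mult_right_mono) auto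
    also have "\<dots> = 2 * (real (K - 1) * \<beta>)" by simp
    also have "\<dots> \<le> 2 * (real g - 1)" using bb by simp
    finally show ?thesis .
  qed
  define s where "s = sqrt (real K)"
  have s1: "s \<ge> 1" unfolding s_def using K2 by simp
  have gdef: "g = nat \<lfloor>s\<rfloor> + 1" unfolding g_def gN_def s_def K_def by simp
  have g1: "real g \<le> s + 1" "real g > s" unfolding gdef using s1 by linarith+
  have gpos: "real g > 0" using g1 s1 by linarith
  have mdef: "m = K div g + 1" unfolding m_def mbN_def K_def g_def by simp
  have m1: "real m \<le> s + 1"
  proof -
    have "real (K div g) \<le> real K / real g" by (rule of_nat_div_le_of_nat)
    also have "\<dots> \<le> real K / s" using g1 s1 by (intro divide_left_mono) auto
    also have "\<dots> = s" unfolding s_def using K2 by (simp add: real_div_sqrt)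
    finally show ?thesis unfolding mdef by simp
  qed
  have bound: "1 + real K * \<beta> + real m \<le> 5 * sqrt N"
  proof -
    have "1 + real K * \<beta> + real m \<le> 1 + 2 * (real g - 1) + real m" using Kb by simp
    also have "\<dots> \<le> 1 + 2 * (s + 1 - 1) + (s + 1)" using g1 m1 by simp
    also have "\<dots> = 3 * s + 2" by simp
    also have "\<dots> \<le> 5 * s" using s1 by linarith
    also have "s \<le> sqrt N" unfolding s_def K_def by simp
    finally show ?thesis by linarith
  qed
  have pos5: "0 < 1 + real K * \<beta> + real m" using b0 K2 by (simp add: add_pos_nonneg)
  have sN: "sqrt (real N) > 0" using N3 by simp
  have "T \<le> real K * (1 + real K * \<beta> + real m)" using Tup by (simp add: algebra_simps)
  hence "real K / (real K * (1 + real K * \<beta> + real m)) \<le> real K / T"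
    using Tpos K2 by (intro divide_left_mono) auto
  hence "1 / (1 + real K * \<beta> + real m) \<le> real K / T" using K2 by simp
  moreover have "1 / (5 * sqrt N) \<le> 1 / (1 + real K * \<beta> + real m)"
    using bound pos5 sN by (intro divide_left_mono) auto
  ultimately have "1 / (5 * sqrt N) \<le> real K / T" by linarith
  thus ?thesis unfolding rate_Tden T_def K_def by simp
qed

lemma cap_bounds:
  assumes N5: "N \<ge> 5"
  shows "1 / (5 * sqrt N) \<le> pir_capacity_star N" "pir_capacity_star N \<le> 5 / sqrt N"
proof -
  define A where "A = {pir_rate N L \<mu> ans | L \<mu> ans. L \<ge> 1 \<and> is_star_pir_scheme N L \<mu> ans}"
  have cap: "pir_capacity_star N = Sup A" unfolding A_def pir_capacity_star_def ..
  have N3: "N \<ge> 3" using N5 by simp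
  have mem: "pir_rate N (N-1) (muS N) (ansS N) \<in> A"
    unfolding A_def using scheme_ok[OF N3] N3 by (intro CollectI exI[of _ "N-1"] exI[of _ "muS N"] exI[of _ "ansS N"]) auto
  have ub: "x \<le> 5 / sqrt N" if "x \<in> A" for x
    using that rate_upper[OF _ N5] unfolding A_def by auto
  have bdd: "bdd_above A" using ub by (intro bdd_aboveI) 
  show "pir_capacity_star N \<le> 5 / sqrt N" unfolding cap
    by (rule cSup_least) (use mem ub in auto)
  have "1 / (5 * sqrt N) \<le> pir_rate N (N-1) (muS N) (ansS N)" by (rule rate_lower[OF N3])
  also have "\<dots> \<le> Sup A" by (rule cSup_upper[OF mem bdd])
  finally show "1 / (5 * sqrt N) \<le> pir_capacity_star N" unfolding cap .
qed

lemma cap_ev: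
  "\<forall>\<^sub>F x in at_top. 1 / 5 * norm (1 / sqrt (real x)) \<le> norm (pir_capacity_star x) \<and>
        norm (pir_capacity_star x) \<le> 5 * norm (1 / sqrt (real x))"
proof (rule eventually_at_top_linorderI[of 5])
  fix x :: nat assume x: "5 \<le> x"
  note b = cap_bounds[OF x]
  have sp: "sqrt (real x) > 0" using x by simp
  have "0 < 1 / (5 * sqrt (real x))" using sp by simp
  hence pos: "0 \<le> pir_capacity_star x" using b(1) by linarith
  have n1: "norm (1 / sqrt (real x)) = 1 / sqrt (real x)" using sp by simp
  have n2: "norm (pir_capacity_star x) = pir_capacity_star x" using pos by simp
  have e1: "1 / 5 * (1 / sqrt (real x)) = 1 / (5 * sqrt (real x))" by simp
  have e2: "5 * (1 / sqrt (real x)) = 5 / sqrt (real x)" by simp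
  show "1 / 5 * norm (1 / sqrt (real x)) \<le> norm (pir_capacity_star x) \<and>
      norm (pir_capacity_star x) \<le> 5 * norm (1 / sqrt (real x))"
    unfolding n1 n2 e1 e2 using b by simp
qed

theorem theorem7:
  shows "pir_capacity_star \<in> \<Theta>(\<lambda>N. 1 / sqrt (real N))"
proof (rule bigthetaI)
  show "pir_capacity_star \<in> O(\<lambda>N. 1 / sqrt (real N))"
    by (rule bigoI[where c = 5]) (rule eventually_mono[OF cap_ev], blast)
  show "pir_capacity_star \<in> \<Omega>(\<lambda>N. 1 / sqrt (real N))"
    by (rule landau_omega.bigI[where c = "1/5"]) (simp, rule eventually_mono[OF cap_ev], blast)
qed

end
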